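(* Let $\pi$ be a projective unitary representation of a countable group $G$ on a Hilbert space $H$ such that the set $\mathcal{B}_\pi$ of Bessel vectors of $\pi$ is dense in $H$ and $\pi$ admits a Riesz sequence vector. Suppose $\xi\in H$ is such that $\mathrm{range}(\Theta_{\xi,\pi})$ is not dense in $\ell^2(G)$. Then there exists a nonzero vector $x\in H$ such that $\mathrm{range}(\Theta_{x,\pi})$ and $\mathrm{range}(\Theta_{\xi,\pi})$ are orthogonal.
   Context: A projective unitary representation of $G$ on $H$ is a map $g\mapsto\pi(g)$ into unitaries with $\pi(g)\pi(h)=\mu(g,h)\pi(gh)$, $\mu:G\times G\to\mathbb{T}$. $\xi$ is a Bessel vector (resp. Riesz sequence vector) for $\pi$ if $\{\pi(g)\xi\}_{g\in G}$ is a Bessel sequence (resp. a Riesz basis for its closed span). The analysis operator $\Theta_{x,\pi}(y)=\sum_{g\in G}\langle y,\pi(g)x\rangle\chi_g$ ($\{\chi_g\}$ the standard basis of $\ell^2(G)$) is defined on $\{y\in H:\sum_g|\langle y,\pi(g)x\rangle|^2<\infty\}$. *)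

theory Defs
  imports "HOL-Analysis.Analysis" "HOL-Algebra.Group"
begin

class complex_vector = real_vector +
  fixes scaleC :: "complex \<Rightarrow> 'a \<Rightarrow> 'a" (infixr "*\<^sub>C" 75)
  assumes scaleC_add_right: "a *\<^sub>C (x + y) = a *\<^sub>C x + a *\<^sub>C y"
    and scaleC_add_left: "(a + b) *\<^sub>C x = a *\<^sub>C x + b *\<^sub>C x"
    and scaleC_scaleC: "a *\<^sub>C (b *\<^sub>C x) = (a * b) *\<^sub>C x"
    and scaleC_one: "1 *\<^sub>C x = x"
    and scaleR_scaleC: "scaleR r x = complex_of_real r *\<^sub>C x"

class complex_inner = complex_vector + real_normed_vector +
  fixes cinner :: "'a \<Rightarrow> 'a \<Rightarrow> complex"
  assumes cinner_commute: "cinner x y = cnj (cinner y x)"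
    and cinner_add_left: "cinner (x + y) z = cinner x z + cinner y z"
    and cinner_scaleC_left: "cinner (r *\<^sub>C x) y = r * cinner x y"
    and cinner_ge_zero: "0 \<le> Re (cinner x x)"
    and cinner_eq_zero_iff: "cinner x x = 0 \<longleftrightarrow> x = 0"
    and norm_eq_sqrt_cinner: "norm x = sqrt (Re (cinner x x))"

text \<open>A complex Hilbert space is a type of sort {complex_inner, complete_space}.
  The inner product is linear in the first argument.\<close>

definition cunitary :: "('h::complex_inner \<Rightarrow> 'h) \<Rightarrow> bool" where
  "cunitary U \<longleftrightarrow> (\<forall>x y. U (x + y) = U x + U y) \<and> (\<forall>c x. U (c *\<^sub>C x) = c *\<^sub>C U x)
     \<and> (\<forall>x y. cinner (U x) (U y) = cinner x y) \<and> surj U"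

definition proj_unitary_rep :: "('g, 'b) monoid_scheme \<Rightarrow> ('g \<Rightarrow> 'h::complex_inner \<Rightarrow> 'h) \<Rightarrow> bool" where
  "proj_unitary_rep G \<pi> \<longleftrightarrow> (\<forall>g\<in>carrier G. cunitary (\<pi> g)) \<and>
     (\<exists>\<mu> :: 'g \<Rightarrow> 'g \<Rightarrow> complex. \<forall>g\<in>carrier G. \<forall>h\<in>carrier G.
        cmod (\<mu> g h) = 1 \<and> (\<forall>x. \<pi> g (\<pi> h x) = \<mu> g h *\<^sub>C \<pi> (g \<otimes>\<^bsub>G\<^esub> h) x))"

definition bessel_vector :: "('g, 'b) monoid_scheme \<Rightarrow> ('g \<Rightarrow> 'h::complex_inner \<Rightarrow> 'h) \<Rightarrow> 'h \<Rightarrow> bool" where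
  "bessel_vector G \<pi> \<xi> \<longleftrightarrow> (\<exists>B. \<forall>y.
      (\<lambda>g. (cmod (cinner y (\<pi> g \<xi>)))\<^sup>2) summable_on carrier G \<and>
      (\<Sum>\<^sub>\<infinity>g\<in>carrier G. (cmod (cinner y (\<pi> g \<xi>)))\<^sup>2) \<le> B * (norm y)\<^sup>2)"

text \<open>Riesz sequence (= Riesz basis for its closed span), via the standard frame-type inequalities
  on finitely supported coefficient families.\<close>
definition riesz_vector :: "('g, 'b) monoid_scheme \<Rightarrow> ('g \<Rightarrow> 'h::complex_inner \<Rightarrow> 'h) \<Rightarrow> 'h \<Rightarrow> bool" where
  "riesz_vector G \<pi> \<xi> \<longleftrightarrow> (\<exists>A B. 0 < A \<and> 0 < B \<and>
     (\<forall>(c :: 'g \<Rightarrow> complex) F. finite F \<and> F \<subseteq> carrier G \<longrightarrow>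
        A * (\<Sum>g\<in>F. (cmod (c g))\<^sup>2) \<le> (norm (\<Sum>g\<in>F. c g *\<^sub>C \<pi> g \<xi>))\<^sup>2 \<and>
        (norm (\<Sum>g\<in>F. c g *\<^sub>C \<pi> g \<xi>))\<^sup>2 \<le> B * (\<Sum>g\<in>F. (cmod (c g))\<^sup>2)))"

definition l2 :: "('g, 'b) monoid_scheme \<Rightarrow> ('g \<Rightarrow> complex) set" where
  "l2 G = {f. (\<forall>g. g \<notin> carrier G \<longrightarrow> f g = 0) \<and> (\<lambda>g. (cmod (f g))\<^sup>2) summable_on carrier G}"

definition l2_inner :: "('g, 'b) monoid_scheme \<Rightarrow> ('g \<Rightarrow> complex) \<Rightarrow> ('g \<Rightarrow> complex) \<Rightarrow> complex" where
  "l2_inner G f h = (\<Sum>\<^sub>\<infinity>g\<in>carrier G. f g * cnj (h g))"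

definition l2_norm :: "('g, 'b) monoid_scheme \<Rightarrow> ('g \<Rightarrow> complex) \<Rightarrow> real" where
  "l2_norm G f = sqrt (\<Sum>\<^sub>\<infinity>g\<in>carrier G. (cmod (f g))\<^sup>2)"

definition l2_dense :: "('g, 'b) monoid_scheme \<Rightarrow> ('g \<Rightarrow> complex) set \<Rightarrow> bool" where
  "l2_dense G S \<longleftrightarrow> (\<forall>f\<in>l2 G. \<forall>\<epsilon>>0. \<exists>s\<in>S. l2_norm G (\<lambda>g. f g - s g) < \<epsilon>)"

definition analysis_domain :: "('g, 'b) monoid_scheme \<Rightarrow> ('g \<Rightarrow> 'h::complex_inner \<Rightarrow> 'h) \<Rightarrow> 'h \<Rightarrow> 'h set" where
  "analysis_domain G \<pi> x = {y. (\<lambda>g. (cmod (cinner y (\<pi> g x)))\<^sup>2) summable_on carrier G}"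

definition analysis_op :: "('g, 'b) monoid_scheme \<Rightarrow> ('g \<Rightarrow> 'h::complex_inner \<Rightarrow> 'h) \<Rightarrow> 'h \<Rightarrow> 'h \<Rightarrow> ('g \<Rightarrow> complex)" where
  "analysis_op G \<pi> x y = (\<lambda>g. if g \<in> carrier G then cinner y (\<pi> g x) else 0)"

definition analysis_range :: "('g, 'b) monoid_scheme \<Rightarrow> ('g \<Rightarrow> 'h::complex_inner \<Rightarrow> 'h) \<Rightarrow> 'h \<Rightarrow> ('g \<Rightarrow> complex) set" where
  "analysis_range G \<pi> x = analysis_op G \<pi> x ` analysis_domain G \<pi> x"

end

theory Submission
  imports Defs
begin

section \<open>Basic complex inner product facts\<close>

lemma scaleC_zero_left [simp]: "0 *\<^sub>C (x::'a::complex_vector) = 0"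
proof -
  have "(0 + 0) *\<^sub>C x = 0 *\<^sub>C x + 0 *\<^sub>C x" by (rule scaleC_add_left)
  then show ?thesis by simp
qed

lemma scaleC_zero_right [simp]: "c *\<^sub>C (0::'a::complex_vector) = 0"
proof -
  have "c *\<^sub>C (0 + 0::'a) = c *\<^sub>C 0 + c *\<^sub>C 0" by (rule scaleC_add_right)
  then show ?thesis by simp
qed

lemma scaleC_minus_right: "c *\<^sub>C (- x) = - (c *\<^sub>C (x::'a::complex_vector))"
proof -
  have "c *\<^sub>C (x + - x) = c *\<^sub>C x + c *\<^sub>C (- x)" by (rule scaleC_add_right)
  then have "c *\<^sub>C x + c *\<^sub>C (- x) = 0" by simp
  from minus_unique[OF this] show ?thesis by simp
qed

lemma scaleC_diff_right: "c *\<^sub>C (x - y) = c *\<^sub>C x - c *\<^sub>C (y::'a::complex_vector)"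
proof -
  have "c *\<^sub>C (x - y) = c *\<^sub>C (x + - y)" by simp
  also have "\<dots> = c *\<^sub>C x + c *\<^sub>C (- y)" by (rule scaleC_add_right)
  also have "\<dots> = c *\<^sub>C x - c *\<^sub>C y" by (simp add: scaleC_minus_right)
  finally show ?thesis .
qed

lemma scaleC_minus_left: "(- c) *\<^sub>C x = - (c *\<^sub>C (x::'a::complex_vector))"
proof -
  have "(c + - c) *\<^sub>C x = c *\<^sub>C x + (- c) *\<^sub>C x" by (rule scaleC_add_left)
  then have "c *\<^sub>C x + (- c) *\<^sub>C x = 0" by simp
  from minus_unique[OF this] show ?thesis by simp
qed

lemma scaleC_diff_left: "(a - b) *\<^sub>C x = a *\<^sub>C x - b *\<^sub>C (x::'a::complex_vector)"
proof -
  have "(a - b) *\<^sub>C x = (a + - b) *\<^sub>C x" by simp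
  also have "\<dots> = a *\<^sub>C x + (- b) *\<^sub>C x" by (rule scaleC_add_left)
  also have "\<dots> = a *\<^sub>C x - b *\<^sub>C x" by (simp add: scaleC_minus_left)
  finally show ?thesis .
qed

lemma scaleC_sum_right: "c *\<^sub>C sum f A = (\<Sum>a\<in>A. c *\<^sub>C (f a :: 'a::complex_vector))"
  by (induction A rule: infinite_finite_induct) (auto simp: scaleC_add_right)

lemma cinner_zero_left [simp]: "cinner 0 (y::'a::complex_inner) = 0"
proof -
  have "cinner (0 + 0) y = cinner 0 y + cinner 0 y" by (rule cinner_add_left)
  then show ?thesis by simp
qed

lemma cinner_zero_right [simp]: "cinner (x::'a::complex_inner) 0 = 0"
  by (subst cinner_commute) simp

lemma cinner_add_right: "cinner x (y + z) = cinner x y + cinner (x::'a::complex_inner) z"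
  by (subst (1 2 3) cinner_commute) (simp add: cinner_add_left)

lemma cinner_scaleC_right: "cinner x (c *\<^sub>C y) = cnj c * cinner (x::'a::complex_inner) y"
  by (subst (1 2) cinner_commute) (simp add: cinner_scaleC_left)

lemma cinner_minus_left: "cinner (- x) y = - cinner (x::'a::complex_inner) y"
proof -
  have h: "cinner x y + cinner (- x) y = 0" using cinner_add_left[of x "-x" y] by simp
  have "cinner (- x) y = (cinner x y + cinner (- x) y) - cinner x y" by simp
  also have "\<dots> = - cinner x y" using h by simp
  finally show ?thesis .
qed

lemma cinner_diff_left: "cinner (x - y) z = cinner x z - cinner (y::'a::complex_inner) z"
proof -
  have "cinner (x - y) z = cinner (x + - y) z" by simp
  also have "\<dots> = cinner x z + cinner (- y) z" by (rule cinner_add_left)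
  also have "\<dots> = cinner x z - cinner y z" by (simp add: cinner_minus_left)
  finally show ?thesis .
qed

lemma cinner_minus_right: "cinner x (- y) = - cinner (x::'a::complex_inner) y"
  by (subst (1 2) cinner_commute) (simp add: cinner_minus_left)

lemma cinner_diff_right: "cinner x (y - z) = cinner x y - cinner (x::'a::complex_inner) z"
  by (subst (1 2 3) cinner_commute) (simp add: cinner_diff_left)

lemma cinner_sum_left: "cinner (sum f A) (y::'a::complex_inner) = (\<Sum>a\<in>A. cinner (f a) y)"
  by (induction A rule: infinite_finite_induct) (auto simp: cinner_add_left)

lemma cinner_sum_right: "cinner (y::'a::complex_inner) (sum f A) = (\<Sum>a\<in>A. cinner y (f a))"
  by (induction A rule: infinite_finite_induct) (auto simp: cinner_add_right)

lemma cinner_self_real: "cinner x x = complex_of_real ((norm (x::'a::complex_inner))\<^sup>2)"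
proof -
  have "cnj (cinner x x) = cinner x x"
    using cinner_commute[of x x] by simp
  then have "Im (cinner x x) = 0"
    by (metis Reals_cnj_iff complex_is_Real_iff)
  moreover have "Re (cinner x x) = (norm x)\<^sup>2"
    using norm_eq_sqrt_cinner[of x] cinner_ge_zero[of x] by simp
  ultimately show ?thesis by (simp add: complex_eq_iff)
qed

lemma norm_scaleC: "norm (c *\<^sub>C x) = cmod c * norm (x::'a::complex_inner)"
proof -
  have "complex_of_real ((norm (c *\<^sub>C x))\<^sup>2) = cinner (c *\<^sub>C x) (c *\<^sub>C x)"
    by (simp only: cinner_self_real)
  also have "\<dots> = (c * cnj c) * cinner x x"
    by (simp add: cinner_scaleC_left cinner_scaleC_right)
  also have "c * cnj c = complex_of_real ((cmod c)\<^sup>2)"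
    by (simp only: complex_norm_square)
  also have "complex_of_real ((cmod c)\<^sup>2) * cinner x x = complex_of_real ((cmod c * norm x)\<^sup>2)"
    by (simp only: cinner_self_real of_real_mult[symmetric] power_mult_distrib)
  finally have "(norm (c *\<^sub>C x))\<^sup>2 = (cmod c * norm x)\<^sup>2"
    by (simp only: of_real_eq_iff)
  then show ?thesis
    by (simp add: power2_eq_iff_nonneg)
qed

lemma scaleC_eq_0_iff: "c *\<^sub>C x = 0 \<longleftrightarrow> c = 0 \<or> (x::'a::complex_inner) = 0"
proof
  assume "c *\<^sub>C x = 0"
  then have "cmod c * norm x = 0" using norm_scaleC[of c x] by simp
  then show "c = 0 \<or> x = 0" by simp
qed auto

lemma cauchy_schwarz_cinner: "cmod (cinner x y) \<le> norm x * norm (y::'a::complex_inner)"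
proof (cases "y = 0")
  case True then show ?thesis by simp
next
  case False
  define r where "r = (norm y)\<^sup>2"
  have r: "r > 0" using False by (simp add: r_def)
  define t where "t = cinner x y / complex_of_real r"
  have yy: "cinner y y = complex_of_real r" by (simp add: r_def cinner_self_real)
  have xx: "cinner x x = complex_of_real ((norm x)\<^sup>2)" by (simp add: cinner_self_real)
  have "cinner (x - t *\<^sub>C y) (x - t *\<^sub>C y) =
        cinner x x - cnj t * cinner x y - t * cinner y x + t * cnj t * cinner y y"
    by (simp add: cinner_diff_left cinner_diff_right cinner_scaleC_left cinner_scaleC_right algebra_simps)
  also have "cinner y x = cnj (cinner x y)" by (rule cinner_commute)
  also have "t * cnj t * cinner y y = cinner x y * cnj (cinner x y) / complex_of_real r"
    using r by (simp add: t_def yy)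
  also have "cnj t * cinner x y = cinner x y * cnj (cinner x y) / complex_of_real r"
    by (simp add: t_def)
  also have "t * cnj (cinner x y) = cinner x y * cnj (cinner x y) / complex_of_real r"
    by (simp add: t_def)
  also have "cinner x y * cnj (cinner x y) = complex_of_real ((cmod (cinner x y))\<^sup>2)"
    by (simp only: complex_norm_square)
  finally have eq0: "cinner (x - t *\<^sub>C y) (x - t *\<^sub>C y) =
      cinner x x - complex_of_real ((cmod (cinner x y))\<^sup>2) / complex_of_real r" 
    by simp
  have eq: "cinner (x - t *\<^sub>C y) (x - t *\<^sub>C y) =
      complex_of_real ((norm x)\<^sup>2 - (cmod (cinner x y))\<^sup>2 / r)"
    unfolding eq0 xx by (simp only: of_real_diff of_real_divide)
  have "0 \<le> Re (cinner (x - t *\<^sub>C y) (x - t *\<^sub>C y))" by (rule cinner_ge_zero)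
  then have "(cmod (cinner x y))\<^sup>2 / r \<le> (norm x)\<^sup>2" by (simp add: eq)
  then have "(cmod (cinner x y))\<^sup>2 \<le> (norm x)\<^sup>2 * r" using r by (simp add: divide_le_eq)
  then have "(cmod (cinner x y))\<^sup>2 \<le> (norm x * norm y)\<^sup>2" by (simp add: r_def power_mult_distrib)
  then show ?thesis
    by (rule power2_le_imp_le) simp
qed

lemma bounded_linear_cinner_left: "bounded_linear (\<lambda>v. cinner v (y::'a::complex_inner))"
proof (rule bounded_linear_intro[where K = "norm y"])
  show "cinner (a + b) y = cinner a y + cinner b y" for a b by (simp add: cinner_add_left)
  show "cinner (r *\<^sub>R a) y = r *\<^sub>R cinner a y" for r a
    by (simp add: scaleR_scaleC cinner_scaleC_left scaleR_conv_of_real)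
  show "norm (cinner a y) \<le> norm a * norm y" for a
    using cauchy_schwarz_cinner[of a y] by simp
qed

lemma cunitary_add: "cunitary U \<Longrightarrow> U (x + y) = U x + U y"
  by (simp add: cunitary_def)

lemma cunitary_scaleC: "cunitary U \<Longrightarrow> U (c *\<^sub>C x) = c *\<^sub>C U x"
  by (simp add: cunitary_def)

lemma cunitary_cinner: "cunitary U \<Longrightarrow> cinner (U x) (U y) = cinner x y"
  by (simp add: cunitary_def)

lemma cunitary_surj: "cunitary U \<Longrightarrow> surj U"
  by (simp add: cunitary_def)

lemma cunitary_norm: "cunitary U \<Longrightarrow> norm (U x) = norm x"
  by (simp add: norm_eq_sqrt_cinner cunitary_cinner)

lemma cunitary_zero: "cunitary U \<Longrightarrow> U 0 = 0"
  using cunitary_norm[of U 0] by simp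

lemma cunitary_diff: "cunitary U \<Longrightarrow> U (x - y) = U x - U y"
  using cunitary_add[of U "x - y" y] by simp

lemma cunitary_inj: "cunitary U \<Longrightarrow> U x = U y \<Longrightarrow> x = y"
  using cunitary_norm[of U "x - y"] by (simp add: cunitary_diff)

lemma cunitary_bounded_linear: "cunitary U \<Longrightarrow> bounded_linear U"
  by (rule bounded_linear_intro[where K = 1])
     (simp_all add: cunitary_add scaleR_scaleC cunitary_scaleC cunitary_norm)

lemma cunitary_sum: "cunitary U \<Longrightarrow> U (sum f A) = (\<Sum>a\<in>A. U (f a))"
  by (induction A rule: infinite_finite_induct) (auto simp: cunitary_add cunitary_zero)

section \<open>The space l2\<close>

lemma sq_sum_le: "((u::real) + v)\<^sup>2 \<le> 2 * u\<^sup>2 + 2 * v\<^sup>2"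
proof -
  have "0 \<le> (u - v)\<^sup>2" by simp
  then show ?thesis unfolding power2_eq_square by (simp add: algebra_simps)
qed

lemma prod_le_sq_sum: "(u::real) * v \<le> u\<^sup>2 + v\<^sup>2"
proof -
  have "0 \<le> (u - v)\<^sup>2" "0 \<le> u\<^sup>2" "0 \<le> v\<^sup>2" by simp_all
  then have h: "2 * (u * v) \<le> u\<^sup>2 + v\<^sup>2" "0 \<le> u\<^sup>2 + v\<^sup>2"
    unfolding power2_eq_square by (simp_all add: algebra_simps)
  show ?thesis
  proof (cases "u * v \<ge> 0")
    case True then show ?thesis using h by linarith
  next
    case False then show ?thesis using h by linarith
  qed
qed

lemma l2_zero_out: "f \<in> l2 G \<Longrightarrow> g \<notin> carrier G \<Longrightarrow> f g = 0"
  by (simp add: l2_def)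

lemma l2_summable: "f \<in> l2 G \<Longrightarrow> (\<lambda>g. (cmod (f g))\<^sup>2) summable_on carrier G"
  by (simp add: l2_def)

lemma l2_add: assumes "f \<in> l2 G" "h \<in> l2 G" shows "(\<lambda>g. f g + h g) \<in> l2 G"
proof -
  have "(\<lambda>g. 2 * (cmod (f g))\<^sup>2 + 2 * (cmod (h g))\<^sup>2) summable_on carrier G"
    using assms by (intro summable_on_add summable_on_cmult_right l2_summable)
  moreover have "(cmod (f g + h g))\<^sup>2 \<le> 2 * (cmod (f g))\<^sup>2 + 2 * (cmod (h g))\<^sup>2" for g
  proof -
    have "(cmod (f g + h g))\<^sup>2 \<le> (cmod (f g) + cmod (h g))\<^sup>2"
      by (rule power_mono[OF norm_triangle_ineq]) simp
    also have "\<dots> \<le> 2 * (cmod (f g))\<^sup>2 + 2 * (cmod (h g))\<^sup>2" by (rule sq_sum_le)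
    finally show ?thesis .
  qed
  ultimately have "(\<lambda>g. (cmod (f g + h g))\<^sup>2) summable_on carrier G"
    by (rule summable_on_comparison_test) simp_all
  then show ?thesis using assms by (simp add: l2_def)
qed

lemma l2_scale: assumes "f \<in> l2 G" shows "(\<lambda>g. c * f g) \<in> l2 G"
proof -
  have "(\<lambda>g. (cmod c)\<^sup>2 * (cmod (f g))\<^sup>2) summable_on carrier G"
    using assms by (intro summable_on_cmult_right l2_summable)
  then show ?thesis using assms by (simp add: l2_def norm_mult power_mult_distrib)
qed

lemma l2_uminus: assumes "f \<in> l2 G" shows "(\<lambda>g. - f g) \<in> l2 G"
  using l2_scale[OF assms, of "-1"] by simp

lemma l2_diff: assumes "f \<in> l2 G" "h \<in> l2 G" shows "(\<lambda>g. f g - h g) \<in> l2 G"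
  using l2_add[OF assms(1) l2_uminus[OF assms(2)]] by simp

lemma l2_0: "(\<lambda>g. 0) \<in> l2 G"
  by (simp add: l2_def)

lemma l2_delta: assumes "g0 \<in> carrier G" shows "(\<lambda>g. if g = g0 then 1 else 0) \<in> l2 G"
proof -
  have "(\<lambda>g. (cmod (if g = g0 then 1 else 0 :: complex))\<^sup>2) summable_on {g0}" by simp
  then have "(\<lambda>g. (cmod (if g = g0 then 1 else 0 :: complex))\<^sup>2) summable_on carrier G"
    by (rule iffD1[OF summable_on_cong_neutral, rotated -1]) (use assms in auto)
  then show ?thesis using assms by (auto simp: l2_def)
qed

lemma l2_prod_abs_summable:
  assumes "f \<in> l2 G" "h \<in> l2 G"
  shows "(\<lambda>g. norm (f g * cnj (h g))) summable_on carrier G"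
proof -
  have "(\<lambda>g. (cmod (f g))\<^sup>2 + (cmod (h g))\<^sup>2) summable_on carrier G"
    using assms by (intro summable_on_add l2_summable)
  then show ?thesis
    by (rule summable_on_comparison_test) (simp_all add: norm_mult prod_le_sq_sum)
qed

lemma l2_prod_summable:
  assumes "f \<in> l2 G" "h \<in> l2 G"
  shows "(\<lambda>g. f g * cnj (h g)) summable_on carrier G"
  by (rule abs_summable_summable, rule l2_prod_abs_summable[OF assms])

lemma l2_inner_add_left:
  assumes "f \<in> l2 G" "f' \<in> l2 G" "h \<in> l2 G"
  shows "l2_inner G (\<lambda>g. f g + f' g) h = l2_inner G f h + l2_inner G f' h"
  unfolding l2_inner_def distrib_right
  by (rule infsum_add; intro l2_prod_summable assms)

lemma l2_inner_scale_left:
  "l2_inner G (\<lambda>g. c * f g) h = c * l2_inner G f h"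
  unfolding l2_inner_def mult.assoc by (rule infsum_cmult_right')

lemma l2_inner_commute: "l2_inner G f h = cnj (l2_inner G h f)"
  unfolding l2_inner_def by (simp flip: infsum_cnj add: mult.commute)

lemma l2_inner_uminus_left: "l2_inner G (\<lambda>g. - f g) h = - l2_inner G f h"
  using l2_inner_scale_left[of G "-1" f h] by simp

lemma l2_inner_diff_left:
  assumes "f \<in> l2 G" "f' \<in> l2 G" "h \<in> l2 G"
  shows "l2_inner G (\<lambda>g. f g - f' g) h = l2_inner G f h - l2_inner G f' h"
  using l2_inner_add_left[OF assms(1) l2_uminus[OF assms(2)] assms(3)]
  by (simp add: l2_inner_uminus_left)

lemma l2_inner_add_right:
  assumes "f \<in> l2 G" "h \<in> l2 G" "h' \<in> l2 G"
  shows "l2_inner G f (\<lambda>g. h g + h' g) = l2_inner G f h + l2_inner G f h'"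
  by (subst (1 2 3) l2_inner_commute) (simp add: l2_inner_add_left assms)

lemma l2_inner_scale_right:
  "l2_inner G f (\<lambda>g. c * h g) = cnj c * l2_inner G f h"
  by (subst (1 2) l2_inner_commute) (simp add: l2_inner_scale_left)

lemma l2_inner_diff_right:
  assumes "f \<in> l2 G" "h \<in> l2 G" "h' \<in> l2 G"
  shows "l2_inner G f (\<lambda>g. h g - h' g) = l2_inner G f h - l2_inner G f h'"
  by (subst (1 2 3) l2_inner_commute) (simp add: l2_inner_diff_left assms)

lemma l2_norm_sq: "f \<in> l2 G \<Longrightarrow> (l2_norm G f)\<^sup>2 = (\<Sum>\<^sub>\<infinity>g\<in>carrier G. (cmod (f g))\<^sup>2)"
proof -
  have "0 \<le> (\<Sum>\<^sub>\<infinity>g\<in>carrier G. (cmod (f g))\<^sup>2)" by (rule infsum_nonneg) simp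
  then show ?thesis unfolding l2_norm_def by simp
qed

lemma l2_norm_nonneg: "l2_norm G f \<ge> 0"
proof -
  have "0 \<le> (\<Sum>\<^sub>\<infinity>g\<in>carrier G. (cmod (f g))\<^sup>2)" by (rule infsum_nonneg) simp
  then show ?thesis unfolding l2_norm_def by simp
qed

lemma l2_inner_self: assumes "f \<in> l2 G" shows "l2_inner G f f = complex_of_real ((l2_norm G f)\<^sup>2)"
proof -
  have "l2_inner G f f = (\<Sum>\<^sub>\<infinity>g\<in>carrier G. complex_of_real ((cmod (f g))\<^sup>2))"
    unfolding l2_inner_def by (simp only: complex_norm_square)
  also have "\<dots> = complex_of_real (\<Sum>\<^sub>\<infinity>g\<in>carrier G. (cmod (f g))\<^sup>2)"
    by (rule infsumI, rule has_sum_of_real, rule has_sum_infsum, rule l2_summable[OF assms])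
  finally show ?thesis by (simp add: l2_norm_sq assms)
qed

lemma l2_point_le: assumes "f \<in> l2 G" shows "cmod (f g) \<le> l2_norm G f"
proof (cases "g \<in> carrier G")
  case False then show ?thesis using assms by (simp add: l2_zero_out l2_norm_nonneg)
next
  case True
  have "(cmod (f g))\<^sup>2 = (\<Sum>\<^sub>\<infinity>x\<in>{g}. (cmod (f x))\<^sup>2)" by simp
  also have "\<dots> \<le> (\<Sum>\<^sub>\<infinity>x\<in>carrier G. (cmod (f x))\<^sup>2)"
    by (rule infsum_mono_neutral) (use True l2_summable[OF assms] in auto)
  also have "\<dots> = (l2_norm G f)\<^sup>2" by (simp add: l2_norm_sq assms)
  finally show ?thesis by (rule power2_le_imp_le) (simp add: l2_norm_nonneg)
qed

lemma l2_norm_eq_0: assumes "f \<in> l2 G" "l2_norm G f = 0" shows "f = (\<lambda>g. 0)"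
proof
  fix g show "f g = 0" using l2_point_le[OF assms(1), of g] assms(2) by simp
qed

lemma l2_inner_delta:
  assumes "g0 \<in> carrier G"
  shows "l2_inner G f (\<lambda>g. if g = g0 then 1 else 0) = f g0"
proof -
  have "l2_inner G f (\<lambda>g. if g = g0 then 1 else 0) = (\<Sum>\<^sub>\<infinity>g\<in>{g0}. f g * cnj (if g = g0 then 1 else 0))"
    unfolding l2_inner_def by (rule infsum_cong_neutral) (use assms in auto)
  then show ?thesis by simp
qed

lemma l2_norm_scale: assumes "f \<in> l2 G" shows "l2_norm G (\<lambda>g. c * f g) = cmod c * l2_norm G f"
proof -
  have "complex_of_real ((l2_norm G (\<lambda>g. c * f g))\<^sup>2) = l2_inner G (\<lambda>g. c * f g) (\<lambda>g. c * f g)"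
    by (simp only: l2_inner_self[OF l2_scale[OF assms]])
  also have "\<dots> = (c * cnj c) * l2_inner G f f"
    by (simp add: l2_inner_scale_left l2_inner_scale_right)
  also have "c * cnj c = complex_of_real ((cmod c)\<^sup>2)"
    by (simp only: complex_norm_square)
  also have "complex_of_real ((cmod c)\<^sup>2) * l2_inner G f f = complex_of_real ((cmod c * l2_norm G f)\<^sup>2)"
    by (simp only: l2_inner_self[OF assms] of_real_mult[symmetric] power_mult_distrib)
  finally have "(l2_norm G (\<lambda>g. c * f g))\<^sup>2 = (cmod c * l2_norm G f)\<^sup>2"
    by (simp only: of_real_eq_iff)
  then show ?thesis
    by (simp add: power2_eq_iff_nonneg l2_norm_nonneg)
qed

lemma l2_cauchy_schwarz:
  assumes "f \<in> l2 G" "h \<in> l2 G"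
  shows "cmod (l2_inner G f h) \<le> l2_norm G f * l2_norm G h"
proof (cases "l2_norm G h = 0")
  case True
  then have "h = (\<lambda>g. 0)" by (rule l2_norm_eq_0[OF assms(2)])
  then show ?thesis by (simp add: l2_inner_def l2_norm_def)
next
  case False
  define r where "r = (l2_norm G h)\<^sup>2"
  have r: "r > 0" using False by (simp add: r_def)
  define t where "t = l2_inner G f h / complex_of_real r"
  have yy: "l2_inner G h h = complex_of_real r" by (simp add: r_def l2_inner_self assms)
  have xx: "l2_inner G f f = complex_of_real ((l2_norm G f)\<^sup>2)" by (simp add: l2_inner_self assms)
  have th: "(\<lambda>g. t * h g) \<in> l2 G" by (rule l2_scale[OF assms(2)])
  have "l2_inner G (\<lambda>g. f g - t * h g) (\<lambda>g. f g - t * h g) =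
        l2_inner G f f - cnj t * l2_inner G f h - t * l2_inner G h f + t * cnj t * l2_inner G h h"
    using assms th
    by (simp add: l2_inner_diff_left l2_inner_diff_right l2_diff l2_inner_scale_left
          l2_inner_scale_right algebra_simps)
  also have "l2_inner G h f = cnj (l2_inner G f h)" by (rule l2_inner_commute)
  also have "t * cnj t * l2_inner G h h = l2_inner G f h * cnj (l2_inner G f h) / complex_of_real r"
    using r by (simp add: t_def yy)
  also have "cnj t * l2_inner G f h = l2_inner G f h * cnj (l2_inner G f h) / complex_of_real r"
    by (simp add: t_def)
  also have "t * cnj (l2_inner G f h) = l2_inner G f h * cnj (l2_inner G f h) / complex_of_real r"
    by (simp add: t_def)
  also have "l2_inner G f h * cnj (l2_inner G f h) = complex_of_real ((cmod (l2_inner G f h))\<^sup>2)"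
    by (simp only: complex_norm_square)
  finally have eq0: "l2_inner G (\<lambda>g. f g - t * h g) (\<lambda>g. f g - t * h g) =
      l2_inner G f f - complex_of_real ((cmod (l2_inner G f h))\<^sup>2) / complex_of_real r"
    by simp
  have eq: "l2_inner G (\<lambda>g. f g - t * h g) (\<lambda>g. f g - t * h g) =
      complex_of_real ((l2_norm G f)\<^sup>2 - (cmod (l2_inner G f h))\<^sup>2 / r)"
    unfolding eq0 xx by (simp only: of_real_diff of_real_divide)
  have "l2_inner G (\<lambda>g. f g - t * h g) (\<lambda>g. f g - t * h g) =
      complex_of_real ((l2_norm G (\<lambda>g. f g - t * h g))\<^sup>2)"
    by (rule l2_inner_self[OF l2_diff[OF assms(1) th]])
  then have "0 \<le> (l2_norm G f)\<^sup>2 - (cmod (l2_inner G f h))\<^sup>2 / r"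
    unfolding eq of_real_eq_iff by simp
  then have "(cmod (l2_inner G f h))\<^sup>2 / r \<le> (l2_norm G f)\<^sup>2" by simp
  then have "(cmod (l2_inner G f h))\<^sup>2 \<le> (l2_norm G f)\<^sup>2 * r" using r by (simp add: divide_le_eq)
  then have "(cmod (l2_inner G f h))\<^sup>2 \<le> (l2_norm G f * l2_norm G h)\<^sup>2"
    by (simp add: r_def power_mult_distrib)
  then show ?thesis
    by (rule power2_le_imp_le) (simp add: l2_norm_nonneg)
qed

lemma l2_norm_sq_add:
  assumes "f \<in> l2 G" "h \<in> l2 G"
  shows "(l2_norm G (\<lambda>g. f g + h g))\<^sup>2 = (l2_norm G f)\<^sup>2 + (l2_norm G h)\<^sup>2 + 2 * Re (l2_inner G f h)"
proof -
  have "complex_of_real ((l2_norm G (\<lambda>g. f g + h g))\<^sup>2) = l2_inner G (\<lambda>g. f g + h g) (\<lambda>g. f g + h g)"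
    by (rule l2_inner_self[symmetric, OF l2_add[OF assms]])
  also have "\<dots> = l2_inner G f f + l2_inner G h h + (l2_inner G f h + cnj (l2_inner G f h))"
    using assms by (simp add: l2_inner_add_left l2_inner_add_right l2_add
        l2_inner_commute[of G h f] algebra_simps)
  also have "l2_inner G f h + cnj (l2_inner G f h) = complex_of_real (2 * Re (l2_inner G f h))"
    by (simp add: complex_add_cnj)
  finally have "complex_of_real ((l2_norm G (\<lambda>g. f g + h g))\<^sup>2) =
     complex_of_real ((l2_norm G f)\<^sup>2 + (l2_norm G h)\<^sup>2 + 2 * Re (l2_inner G f h))"
    using assms by (simp add: l2_inner_self)
  then show ?thesis by (simp only: of_real_eq_iff)
qed

lemma l2_triangle:
  assumes "f \<in> l2 G" "h \<in> l2 G"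
  shows "l2_norm G (\<lambda>g. f g + h g) \<le> l2_norm G f + l2_norm G h"
proof -
  have "Re (l2_inner G f h) \<le> l2_norm G f * l2_norm G h"
    using l2_cauchy_schwarz[OF assms] complex_Re_le_cmod order_trans by blast
  then have "(l2_norm G (\<lambda>g. f g + h g))\<^sup>2 \<le> (l2_norm G f + l2_norm G h)\<^sup>2"
    unfolding l2_norm_sq_add[OF assms] power2_sum by linarith
  then show ?thesis by (rule power2_le_imp_le) (simp add: l2_norm_nonneg)
qed

lemma l2_norm_minus_commute:
  assumes "f \<in> l2 G" "h \<in> l2 G"
  shows "l2_norm G (\<lambda>g. f g - h g) = l2_norm G (\<lambda>g. h g - f g)"
  using l2_norm_scale[OF l2_diff[OF assms], of "-1"] by simp

lemma l2_triangle_diff: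
  assumes "f \<in> l2 G" "h \<in> l2 G" "k \<in> l2 G"
  shows "l2_norm G (\<lambda>g. f g - k g) \<le> l2_norm G (\<lambda>g. f g - h g) + l2_norm G (\<lambda>g. h g - k g)"
  using l2_triangle[OF l2_diff[OF assms(1,2)] l2_diff[OF assms(2,3)]] by simp
section \<open>Completeness and projections in l2\<close>

lemma l2_finite_sum_le:
  assumes "f \<in> l2 G" "finite F" "F \<subseteq> carrier G"
  shows "(\<Sum>g\<in>F. (cmod (f g))\<^sup>2) \<le> (l2_norm G f)\<^sup>2"
proof -
  have "(\<Sum>g\<in>F. (cmod (f g))\<^sup>2) = (\<Sum>\<^sub>\<infinity>g\<in>F. (cmod (f g))\<^sup>2)" using assms(2) by simp
  also have "\<dots> \<le> (\<Sum>\<^sub>\<infinity>g\<in>carrier G. (cmod (f g))\<^sup>2)"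
    by (rule infsum_mono_neutral) (use assms l2_summable[OF assms(1)] in auto)
  also have "\<dots> = (l2_norm G f)\<^sup>2" by (simp add: l2_norm_sq assms)
  finally show ?thesis .
qed

lemma l2_memI_bound:
  assumes "\<And>g. g \<notin> carrier G \<Longrightarrow> f g = 0"
    and "\<And>F. finite F \<Longrightarrow> F \<subseteq> carrier G \<Longrightarrow> (\<Sum>g\<in>F. (cmod (f g))\<^sup>2) \<le> B"
  shows "f \<in> l2 G \<and> (l2_norm G f)\<^sup>2 \<le> B"
proof -
  have sm: "(\<lambda>g. (cmod (f g))\<^sup>2) summable_on carrier G"
    by (rule nonneg_bdd_above_summable_on) (auto intro!: bdd_aboveI2 assms(2))
  then have mem: "f \<in> l2 G" using assms(1) by (simp add: l2_def)
  have "(\<Sum>\<^sub>\<infinity>g\<in>carrier G. (cmod (f g))\<^sup>2) \<le> B"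
    by (rule infsum_le_finite_sums[OF sm assms(2)])
  then show ?thesis using mem by (simp add: l2_norm_sq)
qed

lemma l2_complete:
  assumes s: "\<And>j. s j \<in> l2 G"
    and cauchy: "\<And>e. e > 0 \<Longrightarrow> \<exists>N. \<forall>i\<ge>N. \<forall>j\<ge>N. l2_norm G (\<lambda>g. s i g - s j g) < e"
  shows "\<exists>f\<in>l2 G. (\<lambda>j. l2_norm G (\<lambda>g. s j g - f g)) \<longlonglongrightarrow> 0"
proof -
  have pc: "Cauchy (\<lambda>j. s j g)" for g
  proof (rule metric_CauchyI)
    fix e :: real assume "e > 0"
    then obtain N where N: "\<forall>i\<ge>N. \<forall>j\<ge>N. l2_norm G (\<lambda>g. s i g - s j g) < e" using cauchy by blast
    have "dist (s i g) (s j g) < e" if "i \<ge> N" "j \<ge> N" for i j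
    proof -
      have "l2_norm G (\<lambda>g. s i g - s j g) < e" using N that by blast
      then show ?thesis using l2_point_le[OF l2_diff[OF s[of i] s[of j]], of g]
        by (simp add: dist_norm)
    qed
    then show "\<exists>M. \<forall>m\<ge>M. \<forall>n\<ge>M. dist (s m g) (s n g) < e" by blast
  qed
  define f where "f g = lim (\<lambda>j. s j g)" for g
  have lim: "(\<lambda>j. s j g) \<longlonglongrightarrow> f g" for g
    unfolding f_def using pc[of g] by (simp add: Cauchy_convergent_iff convergent_LIMSEQ_iff)
  have fout: "f g = 0" if "g \<notin> carrier G" for g
  proof -
    have "(\<lambda>j. s j g) = (\<lambda>j. 0)" using l2_zero_out[OF s that] by simp
    then show ?thesis using lim[of g] LIMSEQ_unique by (metis tendsto_const)
  qed
  have key: "(\<lambda>g. s i g - f g) \<in> l2 G \<and> l2_norm G (\<lambda>g. s i g - f g) \<le> e"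
    if e: "e > 0" and N: "\<forall>i\<ge>N. \<forall>j\<ge>N. l2_norm G (\<lambda>g. s i g - s j g) < e" and i: "i \<ge> N" for e N i
  proof -
    have fb: "(\<Sum>g\<in>F. (cmod (s i g - f g))\<^sup>2) \<le> e\<^sup>2" if F: "finite F" "F \<subseteq> carrier G" for F
    proof -
      have t: "(\<lambda>j. \<Sum>g\<in>F. (cmod (s i g - s j g))\<^sup>2) \<longlonglongrightarrow> (\<Sum>g\<in>F. (cmod (s i g - f g))\<^sup>2)"
        by (intro tendsto_intros lim)
      have "(\<Sum>g\<in>F. (cmod (s i g - s j g))\<^sup>2) \<le> e\<^sup>2" if "j \<ge> N" for j
      proof -
        have "(\<Sum>g\<in>F. (cmod (s i g - s j g))\<^sup>2) \<le> (l2_norm G (\<lambda>g. s i g - s j g))\<^sup>2"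
          by (rule l2_finite_sum_le[OF l2_diff[OF s[of i] s[of j]] F])
        also have "\<dots> \<le> e\<^sup>2"
          using N i that by (intro power_mono) (auto simp: l2_norm_nonneg less_imp_le)
        finally show ?thesis .
      qed
      then show ?thesis by (intro LIMSEQ_le_const2[OF t]) auto
    qed
    have "(\<lambda>g. s i g - f g) \<in> l2 G \<and> (l2_norm G (\<lambda>g. s i g - f g))\<^sup>2 \<le> e\<^sup>2"
      by (rule l2_memI_bound) (use fout l2_zero_out[OF s] fb in auto)
    then show ?thesis using e by (auto intro: power2_le_imp_le)
  qed
  obtain N1 where N1: "\<forall>i\<ge>N1. \<forall>j\<ge>N1. l2_norm G (\<lambda>g. s i g - s j g) < 1"
    using cauchy[of 1] by auto
  have d1: "(\<lambda>g. s N1 g - f g) \<in> l2 G" using key[OF _ N1, of N1] by simp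
  have "(\<lambda>g. s N1 g - (s N1 g - f g)) \<in> l2 G" by (rule l2_diff[OF s d1])
  then have fl2: "f \<in> l2 G" by simp
  have "(\<lambda>j. l2_norm G (\<lambda>g. s j g - f g)) \<longlonglongrightarrow> 0"
  proof (rule LIMSEQ_I)
    fix r :: real assume r: "r > 0"
    then obtain N where N: "\<forall>i\<ge>N. \<forall>j\<ge>N. l2_norm G (\<lambda>g. s i g - s j g) < r / 2"
      using cauchy[of "r/2"] by auto
    have "norm (l2_norm G (\<lambda>g. s n g - f g) - 0) < r" if "n \<ge> N" for n
      using key[OF _ N that] r by (simp add: l2_norm_nonneg)
    then show "\<exists>no. \<forall>n\<ge>no. norm (l2_norm G (\<lambda>g. s n g - f g) - 0) < r" by blast
  qed
  then show ?thesis using fl2 by blast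
qed

lemma l2_norm_sq_diff:
  assumes "f \<in> l2 G" "h \<in> l2 G"
  shows "(l2_norm G (\<lambda>g. f g - h g))\<^sup>2 = (l2_norm G f)\<^sup>2 + (l2_norm G h)\<^sup>2 - 2 * Re (l2_inner G f h)"
proof -
  have "(l2_norm G (\<lambda>g. f g + (-1) * h g))\<^sup>2 =
      (l2_norm G f)\<^sup>2 + (l2_norm G (\<lambda>g. (-1) * h g))\<^sup>2 + 2 * Re (l2_inner G f (\<lambda>g. (-1) * h g))"
    by (rule l2_norm_sq_add[OF assms(1) l2_scale[OF assms(2)]])
  also have "l2_norm G (\<lambda>g. (-1) * h g) = l2_norm G h"
    using l2_norm_scale[OF assms(2), of "-1"] by simp
  also have "l2_inner G f (\<lambda>g. (-1) * h g) = - l2_inner G f h"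
    using l2_inner_scale_right[of G f "-1" h] by simp
  finally show ?thesis by simp
qed

lemma l2_parallelogram:
  assumes "u \<in> l2 G" "v \<in> l2 G"
  shows "(l2_norm G (\<lambda>g. u g - v g))\<^sup>2 + (l2_norm G (\<lambda>g. u g + v g))\<^sup>2 =
         2 * (l2_norm G u)\<^sup>2 + 2 * (l2_norm G v)\<^sup>2"
  using l2_norm_sq_diff[OF assms] l2_norm_sq_add[OF assms] by simp

lemma l2_projection:
  assumes S_sub: "S \<subseteq> l2 G" and S0: "(\<lambda>g. 0) \<in> S"
    and S_add: "\<And>f h. f \<in> S \<Longrightarrow> h \<in> S \<Longrightarrow> (\<lambda>g. f g + h g) \<in> S"
    and S_scale: "\<And>c f. f \<in> S \<Longrightarrow> (\<lambda>g. c * f g) \<in> S"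
    and S_closed: "\<And>s f. (\<And>j. s j \<in> S) \<Longrightarrow> f \<in> l2 G \<Longrightarrow>
                     (\<lambda>j. l2_norm G (\<lambda>g. s j g - f g)) \<longlonglongrightarrow> 0 \<Longrightarrow> f \<in> S"
    and a: "a \<in> l2 G"
  shows "\<exists>q\<in>S. \<forall>s\<in>S. l2_inner G (\<lambda>g. a g - q g) s = 0"
proof -
  define D where "D = (\<lambda>s. (l2_norm G (\<lambda>g. a g - s g))\<^sup>2) ` S"
  define d where "d = Inf D"
  have Dne: "D \<noteq> {}" using S0 by (auto simp: D_def)
  have Dbdd: "bdd_below D" by (auto simp: D_def intro!: bdd_belowI[where m = 0])
  have d_le: "d \<le> (l2_norm G (\<lambda>g. a g - s g))\<^sup>2" if "s \<in> S" for s
    unfolding d_def D_def by (rule cInf_lower) (use that Dbdd in \<open>auto simp: D_def\<close>)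
  have "\<exists>s\<in>S. (l2_norm G (\<lambda>g. a g - s g))\<^sup>2 < d + inverse (real (Suc j))" for j
  proof -
    have "Inf D < d + inverse (real (Suc j))" by (simp add: d_def)
    then obtain x where "x \<in> D" "x < d + inverse (real (Suc j))"
      using cInf_lessD[OF Dne] by blast
    then show ?thesis by (auto simp: D_def)
  qed
  then obtain s where sS: "\<And>j. s j \<in> S"
    and sd: "\<And>j. (l2_norm G (\<lambda>g. a g - s j g))\<^sup>2 < d + inverse (real (Suc j))"
    by metis
  have sl2: "s j \<in> l2 G" for j using sS S_sub by blast
  have cb: "(l2_norm G (\<lambda>g. s i g - s j g))\<^sup>2 \<le> 2 * inverse (real (Suc i)) + 2 * inverse (real (Suc j))"
    for i j
  proof -
    define u where "u = (\<lambda>g. a g - s i g)"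
    define v where "v = (\<lambda>g. a g - s j g)"
    define m where "m = (\<lambda>g. (1/2) * (s i g + s j g))"
    have ul: "u \<in> l2 G" "v \<in> l2 G" unfolding u_def v_def by (intro l2_diff a sl2)+
    have mS: "m \<in> S" unfolding m_def by (intro S_scale S_add sS)
    have e1: "(\<lambda>g. u g - v g) = (\<lambda>g. s j g - s i g)" by (auto simp: u_def v_def)
    have e2: "(\<lambda>g. u g + v g) = (\<lambda>g. 2 * (a g - m g))" by (auto simp: u_def v_def m_def algebra_simps)
    have ml2: "(\<lambda>g. a g - m g) \<in> l2 G" using mS S_sub a by (intro l2_diff) auto
    have "(l2_norm G (\<lambda>g. u g + v g))\<^sup>2 = 4 * (l2_norm G (\<lambda>g. a g - m g))\<^sup>2"
      unfolding e2 l2_norm_scale[OF ml2] by (simp add: power_mult_distrib)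
    moreover have "d \<le> (l2_norm G (\<lambda>g. a g - m g))\<^sup>2" by (rule d_le[OF mS])
    moreover have "(l2_norm G (\<lambda>g. s j g - s i g))\<^sup>2 + (l2_norm G (\<lambda>g. u g + v g))\<^sup>2 =
         2 * (l2_norm G u)\<^sup>2 + 2 * (l2_norm G v)\<^sup>2"
      using l2_parallelogram[OF ul] unfolding e1 .
    moreover have "(l2_norm G u)\<^sup>2 < d + inverse (real (Suc i))" using sd[of i] by (simp add: u_def)
    moreover have "(l2_norm G v)\<^sup>2 < d + inverse (real (Suc j))" using sd[of j] by (simp add: v_def)
    moreover have "(l2_norm G (\<lambda>g. s i g - s j g))\<^sup>2 = (l2_norm G (\<lambda>g. s j g - s i g))\<^sup>2"
      using l2_norm_minus_commute[OF sl2[of i] sl2[of j]] by simp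
    ultimately show ?thesis by linarith
  qed
  have cauchy: "\<exists>N. \<forall>i\<ge>N. \<forall>j\<ge>N. l2_norm G (\<lambda>g. s i g - s j g) < e" if e: "e > 0" for e
  proof -
    obtain N :: nat where N: "4 / e\<^sup>2 < real N" using reals_Archimedean2 by blast
    have Npos: "real N > 0" using N e by (smt (verit) divide_pos_pos zero_less_power)
    have "l2_norm G (\<lambda>g. s i g - s j g) < e" if "i \<ge> N" "j \<ge> N" for i j
    proof -
      have "inverse (real (Suc i)) \<le> inverse (real N)" "inverse (real (Suc j)) \<le> inverse (real N)"
        using that Npos by (auto intro!: le_imp_inverse_le)
      then have "(l2_norm G (\<lambda>g. s i g - s j g))\<^sup>2 \<le> 4 * inverse (real N)"
        using cb[of i j] by linarith
      also have "4 * inverse (real N) < e\<^sup>2"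
        using N Npos e by (simp add: field_simps)
      finally show ?thesis by (rule power2_less_imp_less) (use e in simp)
    qed
    then show ?thesis by blast
  qed
  obtain q where ql2: "q \<in> l2 G" and qlim: "(\<lambda>j. l2_norm G (\<lambda>g. s j g - q g)) \<longlonglongrightarrow> 0"
    using l2_complete[of s G, OF sl2 cauchy] by blast
  have qS: "q \<in> S" by (rule S_closed[OF sS ql2 qlim])
  have wl2: "(\<lambda>g. a g - q g) \<in> l2 G" by (rule l2_diff[OF a ql2])
  have qmin: "(l2_norm G (\<lambda>g. a g - q g))\<^sup>2 \<le> d"
  proof -
    have le: "l2_norm G (\<lambda>g. a g - q g) \<le> sqrt (d + inverse (real (Suc j))) + l2_norm G (\<lambda>g. s j g - q g)" for j
    proof -
      have "l2_norm G (\<lambda>g. a g - q g) \<le> l2_norm G (\<lambda>g. a g - s j g) + l2_norm G (\<lambda>g. s j g - q g)"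
        by (rule l2_triangle_diff[OF a sl2 ql2])
      moreover have "l2_norm G (\<lambda>g. a g - s j g) \<le> sqrt (d + inverse (real (Suc j)))"
        using sd[of j] by (intro real_le_rsqrt) simp
      ultimately show ?thesis by linarith
    qed
    have t: "(\<lambda>j. sqrt (d + inverse (real (Suc j))) + l2_norm G (\<lambda>g. s j g - q g)) \<longlonglongrightarrow> sqrt (d + 0) + 0"
      by (intro tendsto_intros qlim LIMSEQ_inverse_real_of_nat)
    have "l2_norm G (\<lambda>g. a g - q g) \<le> sqrt d"
      using LIMSEQ_le_const[OF t] le by auto
    moreover have "0 \<le> d" unfolding d_def by (rule cInf_greatest[OF Dne]) (auto simp: D_def)
    ultimately show ?thesis
      by (metis l2_norm_nonneg power_mono real_sqrt_pow2)
  qed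
  have orth: "l2_inner G (\<lambda>g. a g - q g) x = 0" if xS: "x \<in> S" for x
  proof -
    define w where "w = (\<lambda>g. a g - q g)"
    define z where "z = l2_inner G w x"
    have xl2: "x \<in> l2 G" using xS S_sub by blast
    have wl: "w \<in> l2 G" using wl2 by (simp add: w_def)
    define ns where "ns = (l2_norm G x)\<^sup>2"
    have ns0: "ns \<ge> 0" by (simp add: ns_def)
    define r where "r = 1 / (ns + 1)"
    have r0: "r > 0" using ns0 by (simp add: r_def)
    have rns: "r * ns < 1" using ns0 by (simp add: r_def field_simps)
    define t where "t = complex_of_real r * z"
    have txS: "(\<lambda>g. q g + t * x g) \<in> S" by (intro S_add qS S_scale xS)
    have eqf: "(\<lambda>g. a g - (q g + t * x g)) = (\<lambda>g. w g - t * x g)" by (auto simp: w_def)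
    have "(l2_norm G w)\<^sup>2 \<le> (l2_norm G (\<lambda>g. w g - t * x g))\<^sup>2"
      using qmin d_le[OF txS] unfolding eqf w_def by linarith
    also have "\<dots> = (l2_norm G w)\<^sup>2 + (l2_norm G (\<lambda>g. t * x g))\<^sup>2 - 2 * Re (l2_inner G w (\<lambda>g. t * x g))"
      by (rule l2_norm_sq_diff[OF wl l2_scale[OF xl2]])
    also have "l2_norm G (\<lambda>g. t * x g) = r * cmod z * l2_norm G x"
      using r0 by (simp add: l2_norm_scale[OF xl2] t_def norm_mult)
    also have "Re (l2_inner G w (\<lambda>g. t * x g)) = r * (cmod z)\<^sup>2"
    proof -
      have "l2_inner G w (\<lambda>g. t * x g) = cnj t * z" by (simp add: l2_inner_scale_right z_def)
      also have "\<dots> = complex_of_real r * (cnj z * z)" by (simp add: t_def)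
      also have "cnj z * z = complex_of_real ((cmod z)\<^sup>2)"
        by (simp only: complex_norm_square mult.commute)
      finally show ?thesis by simp
    qed
    finally have "2 * (r * (cmod z)\<^sup>2) \<le> (r * cmod z * l2_norm G x)\<^sup>2" by simp
    then have "2 * (r * (cmod z)\<^sup>2) \<le> r * (r * ns) * (cmod z)\<^sup>2"
      by (simp add: ns_def power_mult_distrib power2_eq_square algebra_simps)
    then have "2 * (cmod z)\<^sup>2 \<le> (r * ns) * (cmod z)\<^sup>2"
      using r0 by (simp add: algebra_simps)
    moreover have "(r * ns) * (cmod z)\<^sup>2 \<le> 1 * (cmod z)\<^sup>2"
      using rns by (intro mult_right_mono) auto
    ultimately have "(cmod z)\<^sup>2 \<le> 0" by linarith
    then have "(cmod z)\<^sup>2 = 0" using zero_le_power2[of "cmod z"] by linarith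
    then have "z = 0" by simp
    then show ?thesis by (simp add: z_def w_def)
  qed
  show ?thesis using qS orth by blast
qed
section \<open>A Cauchy criterion for Bessel-type sums\<close>

lemma summable_on_bessel_bound:
  fixes f :: "'a \<Rightarrow> 'b::{real_normed_vector, complete_space}" and w :: "'a \<Rightarrow> real"
  assumes wsum: "w summable_on A" and wnn: "\<And>x. x \<in> A \<Longrightarrow> 0 \<le> w x" and B: "B \<ge> 0"
    and bd: "\<And>F. finite F \<Longrightarrow> F \<subseteq> A \<Longrightarrow> (norm (sum f F))\<^sup>2 \<le> B * sum w F"
  shows "f summable_on A"
proof -
  from wsum obtain L where lim: "(sum w \<longlongrightarrow> L) (finite_subsets_at_top A)"
    unfolding has_sum_def summable_on_def by blast
  have "\<exists>P. eventually P (finite_subsets_at_top A) \<and>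
              (\<forall>F F'. P F \<and> P F' \<longrightarrow> dist (sum f F) (sum f F') < e)" if e: "e > 0" for e
  proof -
    define d where "d = e\<^sup>2 / (16 * (B + 1))"
    define P where "P F \<longleftrightarrow> finite F \<and> F \<subseteq> A \<and> dist (sum w F) L < d" for F
    have d0: "d > 0" using e B by (simp add: d_def)
    have ev_P: "eventually P (finite_subsets_at_top A)"
      using lim by (auto simp add: P_def[abs_def] d0 eventually_conj_iff eventually_finite_subsets_at_top_weakI tendsto_iff)
    moreover have "dist (sum f F1) (sum f F2) < e" if "P F1" and "P F2" for F1 F2
    proof -
      from ev_P obtain F' where "finite F'" and "F' \<subseteq> A"
        and P_sup_F': "\<And>F. finite F \<and> F \<supseteq> F' \<and> F \<subseteq> A \<Longrightarrow> P F"
        by atomize_elim (simp add: eventually_finite_subsets_at_top)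
      define F where "F = F' \<union> F1 \<union> F2"
      have F: "finite F" "F \<subseteq> A"
        using F_def P_def[abs_def] that \<open>finite F'\<close> \<open>F' \<subseteq> A\<close> by auto
      have dist_F: "dist (sum w F) L < d"
        by (metis F_def F P_def P_sup_F' le_supE order_refl)
      have sub: "dist (sum f F) (sum f F0) < e / 2" if F0: "F0 \<subseteq> F" "P F0" for F0
      proof -
        have fin0: "finite F0" using F0 F finite_subset by blast
        have "dist (sum f F) (sum f F0) = norm (sum f (F - F0))"
          unfolding dist_norm using F F0 by (subst sum_diff) auto
        moreover have "(norm (sum f (F - F0)))\<^sup>2 \<le> B * sum w (F - F0)"
          using F by (intro bd) auto
        moreover have "sum w (F - F0) = sum w F - sum w F0"
          using F F0 by (subst sum_diff) auto
        moreover have "sum w F - sum w F0 < 2 * d"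
          using dist_F F0(2) unfolding P_def dist_real_def by linarith
        moreover have "sum w (F - F0) \<ge> 0" using F wnn by (intro sum_nonneg) auto
        ultimately have "(dist (sum f F) (sum f F0))\<^sup>2 \<le> B * (2 * d)"
          by (smt (verit) B mult_left_mono)
        also have "\<dots> \<le> (B + 1) * (2 * d)" using d0 by simp
        also have "\<dots> = e\<^sup>2 / 8" using B by (simp add: d_def field_simps)
        also have "\<dots> < (e / 2)\<^sup>2" using e by (simp add: power2_eq_square field_simps)
        finally show ?thesis by (rule power2_less_imp_less) (use e in simp)
      qed
      have "dist (sum f F1) (sum f F2) \<le> dist (sum f F) (sum f F1) + dist (sum f F) (sum f F2)"
        by (rule dist_triangle3)
      also have "\<dots> < e / 2 + e / 2"
        by (intro add_strict_mono sub that) (auto simp: F_def)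
      finally show ?thesis by simp
    qed
    ultimately show ?thesis by blast
  qed
  then have "cauchy_filter (filtermap (sum f) (finite_subsets_at_top A))"
    by (simp add: cauchy_filter_metric_filtermap)
  moreover have "complete (UNIV::'b set)"
    by (meson Cauchy_convergent UNIV_I complete_def convergent_def)
  ultimately obtain L' where "(sum f \<longlongrightarrow> L') (finite_subsets_at_top A)"
    using complete_uniform[where S=UNIV] by (force simp add: filterlim_def)
  then show ?thesis
    using summable_on_def has_sum_def by blast
qed

lemma infsum_bounded_linear_simple:
  assumes "bounded_linear h" "f summable_on A"
  shows "infsum (\<lambda>x. h (f x)) A = h (infsum f A)"
  by (rule infsumI, rule has_sum_bounded_linear[OF assms(1)], rule has_sum_infsum[OF assms(2)])

locale proj_setting = group G for G :: "('g, 'b) monoid_scheme" +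
  fixes \<pi> :: "'g \<Rightarrow> 'h::{complex_inner, complete_space} \<Rightarrow> 'h" and \<mu> :: "'g \<Rightarrow> 'g \<Rightarrow> complex"
  assumes unit: "g \<in> carrier G \<Longrightarrow> cunitary (\<pi> g)"
    and mu1: "g \<in> carrier G \<Longrightarrow> h \<in> carrier G \<Longrightarrow> cmod (\<mu> g h) = 1"
    and cocy: "g \<in> carrier G \<Longrightarrow> h \<in> carrier G \<Longrightarrow> \<pi> g (\<pi> h x) = \<mu> g h *\<^sub>C \<pi> (g \<otimes>\<^bsub>G\<^esub> h) x"
begin

lemma mu_cnj: "g \<in> carrier G \<Longrightarrow> h \<in> carrier G \<Longrightarrow> cnj (\<mu> g h) * \<mu> g h = 1"
  using complex_norm_square[of "\<mu> g h"] mu1[of g h] by (simp add: mult.commute)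

lemma mu_cnj': "g \<in> carrier G \<Longrightarrow> h \<in> carrier G \<Longrightarrow> \<mu> g h * cnj (\<mu> g h) = 1"
  using mu_cnj by (simp add: mult.commute)

lemma gl1: "h \<in> carrier G \<Longrightarrow> g \<in> carrier G \<Longrightarrow> inv\<^bsub>G\<^esub> h \<otimes>\<^bsub>G\<^esub> (h \<otimes>\<^bsub>G\<^esub> g) = g"
  by (simp add: m_assoc[symmetric])

lemma gl2: "h \<in> carrier G \<Longrightarrow> m \<in> carrier G \<Longrightarrow> h \<otimes>\<^bsub>G\<^esub> (inv\<^bsub>G\<^esub> h \<otimes>\<^bsub>G\<^esub> m) = m"
  by (simp add: m_assoc[symmetric])

lemma bij_left: "h \<in> carrier G \<Longrightarrow> bij_betw (\<lambda>g. h \<otimes>\<^bsub>G\<^esub> g) (carrier G) (carrier G)"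
  by (rule bij_betw_byWitness[where f' = "\<lambda>m. inv\<^bsub>G\<^esub> h \<otimes>\<^bsub>G\<^esub> m"]) (auto simp: gl1 gl2)

definition Aop where "Aop h f = (\<lambda>g. if g \<in> carrier G then cnj (\<mu> h g) * f (h \<otimes>\<^bsub>G\<^esub> g) else 0)"
definition Bop where "Bop h f = (\<lambda>m. if m \<in> carrier G then \<mu> h (inv\<^bsub>G\<^esub> h \<otimes>\<^bsub>G\<^esub> m) * f (inv\<^bsub>G\<^esub> h \<otimes>\<^bsub>G\<^esub> m) else 0)"

lemma Aop_l2: assumes h: "h \<in> carrier G" and f: "f \<in> l2 G" shows "Aop h f \<in> l2 G"
proof -
  have "(\<lambda>g. (cmod (f (h \<otimes>\<^bsub>G\<^esub> g)))\<^sup>2) summable_on carrier G"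
    using summable_on_reindex_bij_betw[OF bij_left[OF h], of "\<lambda>m. (cmod (f m))\<^sup>2"] l2_summable[OF f]
    by simp
  moreover have "\<And>g. g \<in> carrier G \<Longrightarrow> (cmod (f (h \<otimes>\<^bsub>G\<^esub> g)))\<^sup>2 = (cmod (Aop h f g))\<^sup>2"
    using h by (simp add: Aop_def norm_mult mu1)
  ultimately have "(\<lambda>g. (cmod (Aop h f g))\<^sup>2) summable_on carrier G"
    using summable_on_cong[of "carrier G" "\<lambda>g. (cmod (f (h \<otimes>\<^bsub>G\<^esub> g)))\<^sup>2" "\<lambda>g. (cmod (Aop h f g))\<^sup>2"] by blast
  then show ?thesis by (simp add: l2_def Aop_def)
qed

lemma Bop_l2: assumes h: "h \<in> carrier G" and f: "f \<in> l2 G" shows "Bop h f \<in> l2 G"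
proof -
  have "(\<lambda>g. (cmod (f (inv\<^bsub>G\<^esub> h \<otimes>\<^bsub>G\<^esub> g)))\<^sup>2) summable_on carrier G"
    using summable_on_reindex_bij_betw[OF bij_left[OF inv_closed[OF h]], of "\<lambda>m. (cmod (f m))\<^sup>2"]
      l2_summable[OF f]
    by simp
  moreover have "\<And>g. g \<in> carrier G \<Longrightarrow> (cmod (f (inv\<^bsub>G\<^esub> h \<otimes>\<^bsub>G\<^esub> g)))\<^sup>2 = (cmod (Bop h f g))\<^sup>2"
    using h by (simp add: Bop_def norm_mult mu1)
  ultimately have "(\<lambda>g. (cmod (Bop h f g))\<^sup>2) summable_on carrier G"
    using summable_on_cong[of "carrier G" "\<lambda>g. (cmod (f (inv\<^bsub>G\<^esub> h \<otimes>\<^bsub>G\<^esub> g)))\<^sup>2" "\<lambda>g. (cmod (Bop h f g))\<^sup>2"] by blast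
  then show ?thesis by (simp add: l2_def Bop_def)
qed

lemma Aop_adj:
  assumes h: "h \<in> carrier G"
  shows "l2_inner G (Aop h f) k = l2_inner G f (Bop h k)"
proof -
  have "l2_inner G f (Bop h k) = (\<Sum>\<^sub>\<infinity>g\<in>carrier G. f (h \<otimes>\<^bsub>G\<^esub> g) * cnj (Bop h k (h \<otimes>\<^bsub>G\<^esub> g)))"
    unfolding l2_inner_def
    by (rule infsum_reindex_bij_betw[OF bij_left[OF h], symmetric])
  also have "\<dots> = (\<Sum>\<^sub>\<infinity>g\<in>carrier G. Aop h f g * cnj (k g))"
    by (rule infsum_cong) (simp add: Aop_def Bop_def gl1 h)
  finally show ?thesis by (simp add: l2_inner_def)
qed

lemma Bop_adj:
  assumes h: "h \<in> carrier G"
  shows "l2_inner G (Bop h f) k = l2_inner G f (Aop h k)"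
  by (subst (1 2) l2_inner_commute) (simp add: Aop_adj h)

lemma Bop_diff: "Bop h (\<lambda>g. u g - v g) = (\<lambda>g. Bop h u g - Bop h v g)"
  by (auto simp: Bop_def algebra_simps)

lemma Bop_scale: "Bop h (\<lambda>g. c * u g) = (\<lambda>g. c * Bop h u g)"
  by (auto simp: Bop_def algebra_simps)

lemma Bop_zero: "Bop h (\<lambda>g. 0) = (\<lambda>g. 0)"
  by (auto simp: Bop_def)

lemma Theta_l2_iff: "analysis_op G \<pi> v z \<in> l2 G \<longleftrightarrow> z \<in> analysis_domain G \<pi> v"
proof -
  have "(\<lambda>g. (cmod (analysis_op G \<pi> v z g))\<^sup>2) summable_on carrier G \<longleftrightarrow>
        (\<lambda>g. (cmod (cinner z (\<pi> g v)))\<^sup>2) summable_on carrier G"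
    by (rule summable_on_cong) (simp add: analysis_op_def)
  then show ?thesis by (simp add: l2_def analysis_domain_def analysis_op_def)
qed

lemma Theta_B:
  assumes h: "h \<in> carrier G"
  shows "analysis_op G \<pi> v (\<pi> h z) = Bop h (analysis_op G \<pi> v z)"
proof
  fix m
  show "analysis_op G \<pi> v (\<pi> h z) m = Bop h (analysis_op G \<pi> v z) m"
  proof (cases "m \<in> carrier G")
    case False then show ?thesis by (simp add: analysis_op_def Bop_def)
  next
    case m: True
    define k where "k = inv\<^bsub>G\<^esub> h \<otimes>\<^bsub>G\<^esub> m"
    have k: "k \<in> carrier G" using h m by (simp add: k_def)
    have hk: "h \<otimes>\<^bsub>G\<^esub> k = m" using h m by (simp add: k_def gl2)
    have "\<pi> h (\<pi> k v) = \<mu> h k *\<^sub>C \<pi> m v" using cocy[OF h k] hk by simp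
    then have "cnj (\<mu> h k) *\<^sub>C \<pi> h (\<pi> k v) = \<pi> m v"
      by (simp add: scaleC_scaleC mu_cnj[OF h k] scaleC_one)
    then have "cinner (\<pi> h z) (\<pi> m v) = cinner (\<pi> h z) (cnj (\<mu> h k) *\<^sub>C \<pi> h (\<pi> k v))"
      by simp
    also have "\<dots> = \<mu> h k * cinner (\<pi> h z) (\<pi> h (\<pi> k v))"
      by (simp add: cinner_scaleC_right)
    also have "\<dots> = \<mu> h k * cinner z (\<pi> k v)" by (simp add: cunitary_cinner unit h)
    finally show ?thesis using m k by (simp add: analysis_op_def Bop_def k_def)
  qed
qed

lemma Theta_A:
  assumes h: "h \<in> carrier G" and w: "\<pi> h w = z"
  shows "analysis_op G \<pi> v w = Aop h (analysis_op G \<pi> v z)"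
proof
  fix g
  show "analysis_op G \<pi> v w g = Aop h (analysis_op G \<pi> v z) g"
  proof (cases "g \<in> carrier G")
    case False then show ?thesis by (simp add: analysis_op_def Aop_def)
  next
    case g: True
    have "cinner w (\<pi> g v) = cinner (\<pi> h w) (\<pi> h (\<pi> g v))" by (simp add: cunitary_cinner unit h)
    also have "\<dots> = cnj (\<mu> h g) * cinner z (\<pi> (h \<otimes>\<^bsub>G\<^esub> g) v)"
      by (simp add: w cocy[OF h g] cinner_scaleC_right)
    finally show ?thesis using g h by (simp add: analysis_op_def Aop_def)
  qed
qed

lemma Theta_add: "analysis_op G \<pi> v (z1 + z2) = (\<lambda>g. analysis_op G \<pi> v z1 g + analysis_op G \<pi> v z2 g)"
  by (auto simp: analysis_op_def cinner_add_left)

lemma Theta_scale: "analysis_op G \<pi> v (c *\<^sub>C z) = (\<lambda>g. c * analysis_op G \<pi> v z g)"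
  by (auto simp: analysis_op_def cinner_scaleC_left)

lemma Theta_zero: "analysis_op G \<pi> v 0 = (\<lambda>g. 0)"
  by (auto simp: analysis_op_def)

lemma range_sub: "analysis_range G \<pi> v \<subseteq> l2 G"
  using Theta_l2_iff by (auto simp: analysis_range_def)

lemma range_B: assumes h: "h \<in> carrier G" and b: "b \<in> analysis_range G \<pi> v"
  shows "Bop h b \<in> analysis_range G \<pi> v"
proof -
  obtain z where z: "z \<in> analysis_domain G \<pi> v" and bz: "b = analysis_op G \<pi> v z"
    using b by (auto simp: analysis_range_def)
  have eq: "analysis_op G \<pi> v (\<pi> h z) = Bop h b" using Theta_B[OF h] bz by simp
  have "Bop h b \<in> l2 G" using Bop_l2[OF h] z bz Theta_l2_iff by simp
  then have d: "\<pi> h z \<in> analysis_domain G \<pi> v" using Theta_l2_iff[of v "\<pi> h z"] eq by simp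
  show ?thesis unfolding analysis_range_def eq[symmetric] by (rule imageI[OF d])
qed

lemma range_A: assumes h: "h \<in> carrier G" and b: "b \<in> analysis_range G \<pi> v"
  shows "Aop h b \<in> analysis_range G \<pi> v"
proof -
  obtain z where z: "z \<in> analysis_domain G \<pi> v" and bz: "b = analysis_op G \<pi> v z"
    using b by (auto simp: analysis_range_def)
  obtain w where w: "\<pi> h w = z" using surjD[OF cunitary_surj[OF unit[OF h]], of z] by blast
  have eq: "analysis_op G \<pi> v w = Aop h b" using Theta_A[OF h w] bz by simp
  have "Aop h b \<in> l2 G" using Aop_l2[OF h] z bz Theta_l2_iff by simp
  then have d: "w \<in> analysis_domain G \<pi> v" using Theta_l2_iff[of v w] eq by simp
  show ?thesis unfolding analysis_range_def eq[symmetric] by (rule imageI[OF d])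
qed

lemma range_add: assumes "b1 \<in> analysis_range G \<pi> v" "b2 \<in> analysis_range G \<pi> v"
  shows "(\<lambda>g. b1 g + b2 g) \<in> analysis_range G \<pi> v"
proof -
  obtain z1 where z1: "z1 \<in> analysis_domain G \<pi> v" "b1 = analysis_op G \<pi> v z1"
    using assms(1) by (auto simp: analysis_range_def)
  obtain z2 where z2: "z2 \<in> analysis_domain G \<pi> v" "b2 = analysis_op G \<pi> v z2"
    using assms(2) by (auto simp: analysis_range_def)
  have e: "analysis_op G \<pi> v (z1 + z2) = (\<lambda>g. b1 g + b2 g)" by (simp add: Theta_add z1 z2)
  have "(\<lambda>g. b1 g + b2 g) \<in> l2 G" using z1 z2 Theta_l2_iff by (intro l2_add) auto
  then have d: "z1 + z2 \<in> analysis_domain G \<pi> v" using Theta_l2_iff[of v "z1 + z2"] e by simp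
  show ?thesis unfolding analysis_range_def e[symmetric] by (rule imageI[OF d])
qed

lemma range_scale: assumes "b \<in> analysis_range G \<pi> v"
  shows "(\<lambda>g. c * b g) \<in> analysis_range G \<pi> v"
proof -
  obtain z where z: "z \<in> analysis_domain G \<pi> v" "b = analysis_op G \<pi> v z"
    using assms by (auto simp: analysis_range_def)
  have e: "analysis_op G \<pi> v (c *\<^sub>C z) = (\<lambda>g. c * b g)" by (simp add: Theta_scale z)
  have "(\<lambda>g. c * b g) \<in> l2 G" using z Theta_l2_iff by (intro l2_scale) auto
  then have d: "c *\<^sub>C z \<in> analysis_domain G \<pi> v" using Theta_l2_iff[of v "c *\<^sub>C z"] e by simp
  show ?thesis unfolding analysis_range_def e[symmetric] by (rule imageI[OF d])
qed

lemma range_zero: "(\<lambda>g. 0) \<in> analysis_range G \<pi> v"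
proof -
  have d: "0 \<in> analysis_domain G \<pi> v" using Theta_zero[of v] Theta_l2_iff[of v 0] l2_0[of G] by simp
  show ?thesis unfolding analysis_range_def Theta_zero[of v, symmetric] by (rule imageI[OF d])
qed

end
context proj_setting
begin

definition Nsp where "Nsp v = {n \<in> l2 G. \<forall>b\<in>analysis_range G \<pi> v. l2_inner G n b = 0}"

lemma N_sub: "Nsp v \<subseteq> l2 G" by (auto simp: Nsp_def)

lemma N_zero: "(\<lambda>g. 0) \<in> Nsp v" by (simp add: Nsp_def l2_0 l2_inner_def)

lemma N_add: assumes "n1 \<in> Nsp v" "n2 \<in> Nsp v" shows "(\<lambda>g. n1 g + n2 g) \<in> Nsp v"
proof -
  have l: "n1 \<in> l2 G" "n2 \<in> l2 G" using assms by (auto simp: Nsp_def)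
  have "l2_inner G (\<lambda>g. n1 g + n2 g) b = 0" if b: "b \<in> analysis_range G \<pi> v" for b
  proof -
    have bl: "b \<in> l2 G" using b range_sub by blast
    show ?thesis using l2_inner_add_left[OF l bl] assms b by (simp add: Nsp_def)
  qed
  then show ?thesis using l2_add[OF l] by (simp add: Nsp_def)
qed

lemma N_scale: assumes "n \<in> Nsp v" shows "(\<lambda>g. c * n g) \<in> Nsp v"
  using assms by (auto simp: Nsp_def l2_scale l2_inner_scale_left)

lemma N_A: assumes h: "h \<in> carrier G" and n: "n \<in> Nsp v" shows "Aop h n \<in> Nsp v"
  using assms range_B[OF h] Aop_l2[OF h] by (auto simp: Nsp_def Aop_adj)

lemma N_B: assumes h: "h \<in> carrier G" and n: "n \<in> Nsp v" shows "Bop h n \<in> Nsp v"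
  using assms range_A[OF h] Bop_l2[OF h] by (auto simp: Nsp_def Bop_adj)

lemma N_closed:
  assumes s: "\<And>j. s j \<in> Nsp v" and f: "f \<in> l2 G"
    and lim: "(\<lambda>j. l2_norm G (\<lambda>g. s j g - f g)) \<longlonglongrightarrow> 0"
  shows "f \<in> Nsp v"
proof -
  have "l2_inner G f b = 0" if b: "b \<in> analysis_range G \<pi> v" for b
  proof -
    have bl: "b \<in> l2 G" using b range_sub by blast
    have sl: "s j \<in> l2 G" for j using s N_sub by blast
    have le: "cmod (l2_inner G f b) \<le> l2_norm G (\<lambda>g. s j g - f g) * l2_norm G b" for j
    proof -
      have "l2_inner G (\<lambda>g. f g - s j g) b = l2_inner G f b - l2_inner G (s j) b"
        by (rule l2_inner_diff_left[OF f sl bl])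
      also have "l2_inner G (s j) b = 0" using s[of j] b by (simp add: Nsp_def)
      finally have "l2_inner G f b = l2_inner G (\<lambda>g. f g - s j g) b" by simp
      also have "cmod \<dots> \<le> l2_norm G (\<lambda>g. f g - s j g) * l2_norm G b"
        by (rule l2_cauchy_schwarz[OF l2_diff[OF f sl] bl])
      also have "l2_norm G (\<lambda>g. f g - s j g) = l2_norm G (\<lambda>g. s j g - f g)"
        by (rule l2_norm_minus_commute[OF f sl])
      finally show ?thesis .
    qed
    have t: "(\<lambda>j. l2_norm G (\<lambda>g. s j g - f g) * l2_norm G b) \<longlonglongrightarrow> 0 * l2_norm G b"
      by (intro tendsto_intros lim)
    have "cmod (l2_inner G f b) \<le> 0 * l2_norm G b"
      by (rule LIMSEQ_le_const[OF t]) (use le in blast)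
    then show ?thesis by simp
  qed
  then show ?thesis using f by (simp add: Nsp_def)
qed

lemma Pr_ex: assumes a: "a \<in> l2 G" shows "\<exists>p\<in>Nsp v. \<forall>n\<in>Nsp v. l2_inner G (\<lambda>g. a g - p g) n = 0"
  by (rule l2_projection[OF N_sub N_zero N_add N_scale N_closed a])

definition Pr where "Pr v a = (SOME p. p \<in> Nsp v \<and> (\<forall>n\<in>Nsp v. l2_inner G (\<lambda>g. a g - p g) n = 0))"

lemma Pr: assumes a: "a \<in> l2 G"
  shows "Pr v a \<in> Nsp v" "\<And>n. n \<in> Nsp v \<Longrightarrow> l2_inner G (\<lambda>g. a g - Pr v a g) n = 0"
proof -
  have ex: "\<exists>p. p \<in> Nsp v \<and> (\<forall>n\<in>Nsp v. l2_inner G (\<lambda>g. a g - p g) n = 0)"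
    using Pr_ex[OF a, of v] by blast
  have "Pr v a \<in> Nsp v \<and> (\<forall>n\<in>Nsp v. l2_inner G (\<lambda>g. a g - Pr v a g) n = 0)"
    unfolding Pr_def by (rule someI_ex[OF ex])
  then show "Pr v a \<in> Nsp v" "\<And>n. n \<in> Nsp v \<Longrightarrow> l2_inner G (\<lambda>g. a g - Pr v a g) n = 0" by auto
qed

lemma Pr_l2: "a \<in> l2 G \<Longrightarrow> Pr v a \<in> l2 G"
  using Pr(1) N_sub by blast

lemma Pr_unique:
  assumes a: "a \<in> l2 G" and p: "p \<in> Nsp v" and orth: "\<And>n. n \<in> Nsp v \<Longrightarrow> l2_inner G (\<lambda>g. a g - p g) n = 0"
  shows "Pr v a = p"
proof -
  define d where "d = (\<lambda>g. Pr v a g - p g)"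
  have dN: "d \<in> Nsp v" unfolding d_def using N_add[OF Pr(1)[OF a, where v=v] N_scale[OF p, of "-1"]] by simp
  have pl: "p \<in> l2 G" using p N_sub by blast
  have dl: "d \<in> l2 G" using dN N_sub by blast
  have eqd: "(\<lambda>g. (a g - p g) - (a g - Pr v a g)) = d" by (auto simp: d_def)
  have "l2_inner G d d = l2_inner G (\<lambda>g. a g - p g) d - l2_inner G (\<lambda>g. a g - Pr v a g) d"
    using l2_inner_diff_left[OF l2_diff[OF a pl] l2_diff[OF a Pr_l2[OF a, where v=v]] dl]
    by (simp only: eqd)
  also have "\<dots> = 0" using orth[OF dN] Pr(2)[OF a, where v=v, OF dN] by simp
  finally have "l2_norm G d = 0" using l2_inner_self[OF dl] by simp
  then have "d = (\<lambda>g. 0)" by (rule l2_norm_eq_0[OF dl])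
  then show ?thesis by (auto simp: d_def fun_eq_iff)
qed

lemma Pr_fix: assumes n: "n \<in> Nsp v" shows "Pr v n = n"
proof -
  have nl: "n \<in> l2 G" using n N_sub by blast
  show ?thesis by (rule Pr_unique[OF nl n]) (simp add: l2_inner_def)
qed

lemma Pr_scale: assumes a: "a \<in> l2 G" shows "Pr v (\<lambda>g. c * a g) = (\<lambda>g. c * Pr v a g)"
proof (rule Pr_unique[OF l2_scale[OF a] N_scale[OF Pr(1)[OF a, where v=v]]])
  fix n assume n: "n \<in> Nsp v"
  have "(\<lambda>g. c * a g - c * Pr v a g) = (\<lambda>g. c * (a g - Pr v a g))" by (simp add: algebra_simps)
  then show "l2_inner G (\<lambda>g. c * a g - c * Pr v a g) n = 0"
    using Pr(2)[OF a, where v=v, OF n] by (simp add: l2_inner_scale_left)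
qed

lemma Pr_B: assumes h: "h \<in> carrier G" and a: "a \<in> l2 G" shows "Pr v (Bop h a) = Bop h (Pr v a)"
proof (rule Pr_unique[OF Bop_l2[OF h a] N_B[OF h Pr(1)[OF a, where v=v]]])
  fix n assume n: "n \<in> Nsp v"
  have "(\<lambda>g. Bop h a g - Bop h (Pr v a) g) = Bop h (\<lambda>g. a g - Pr v a g)" by (simp add: Bop_diff)
  then show "l2_inner G (\<lambda>g. Bop h a g - Bop h (Pr v a) g) n = 0"
    using Pr(2)[OF a, where v=v, OF N_A[OF h n]] by (simp add: Bop_adj[OF h])
qed

lemma Pr_sym: assumes a: "a \<in> l2 G" and b: "b \<in> l2 G"
  shows "l2_inner G (Pr v a) b = l2_inner G a (Pr v b)"
proof -
  have pa: "Pr v a \<in> l2 G" and pb: "Pr v b \<in> l2 G" using Pr_l2[OF a, where v=v] Pr_l2[OF b, where v=v] by auto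
  have "l2_inner G (Pr v a) (\<lambda>g. b g - Pr v b g) = cnj (l2_inner G (\<lambda>g. b g - Pr v b g) (Pr v a))"
    by (rule l2_inner_commute)
  also have "\<dots> = 0" using Pr(2)[OF b, where v=v, OF Pr(1)[OF a, where v=v]] by simp
  finally have 1: "l2_inner G (Pr v a) b = l2_inner G (Pr v a) (Pr v b)"
    using l2_inner_diff_right[OF pa b pb] by simp
  have "l2_inner G (\<lambda>g. a g - Pr v a g) (Pr v b) = 0" using Pr(2)[OF a, where v=v, OF Pr(1)[OF b, where v=v]] .
  then have 2: "l2_inner G a (Pr v b) = l2_inner G (Pr v a) (Pr v b)"
    using l2_inner_diff_left[OF a pa pb] by simp
  show ?thesis using 1 2 by simp
qed

end
context proj_setting
begin

lemma bessel_of_riesz: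
  assumes riesz: "riesz_vector G \<pi> \<eta>"
  shows "analysis_op G \<pi> \<eta> y \<in> l2 G"
proof -
  obtain A B where A: "0 < A" and B: "0 < B" and AB: "\<forall>(c :: 'g \<Rightarrow> complex) F. finite F \<and> F \<subseteq> carrier G \<longrightarrow>
        A * (\<Sum>g\<in>F. (cmod (c g))\<^sup>2) \<le> (norm (\<Sum>g\<in>F. c g *\<^sub>C \<pi> g \<eta>))\<^sup>2 \<and>
        (norm (\<Sum>g\<in>F. c g *\<^sub>C \<pi> g \<eta>))\<^sup>2 \<le> B * (\<Sum>g\<in>F. (cmod (c g))\<^sup>2)"
    using riesz unfolding riesz_vector_def by blast
  have lo: "\<And>c F. finite F \<Longrightarrow> F \<subseteq> carrier G \<Longrightarrow>
        A * (\<Sum>g\<in>F. (cmod (c g))\<^sup>2) \<le> (norm (\<Sum>g\<in>F. c g *\<^sub>C \<pi> g \<eta>))\<^sup>2"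
    using AB by blast
  have up: "\<And>c F. finite F \<Longrightarrow> F \<subseteq> carrier G \<Longrightarrow>
        (norm (\<Sum>g\<in>F. c g *\<^sub>C \<pi> g \<eta>))\<^sup>2 \<le> B * (\<Sum>g\<in>F. (cmod (c g))\<^sup>2)"
    using AB by blast
  define c where "c k = cinner y (\<pi> k \<eta>)" for k
  have fb: "(\<Sum>g\<in>F. (cmod (c g))\<^sup>2) \<le> B * (norm y)\<^sup>2" if F: "finite F" "F \<subseteq> carrier G" for F
  proof -
    define S where "S = (\<Sum>g\<in>F. (cmod (c g))\<^sup>2)"
    define w where "w = (\<Sum>g\<in>F. c g *\<^sub>C \<pi> g \<eta>)"
    have S0: "S \<ge> 0" unfolding S_def by (intro sum_nonneg) simp
    have "cinner y w = (\<Sum>g\<in>F. cnj (c g) * c g)"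
      unfolding w_def by (simp add: cinner_sum_right cinner_scaleC_right c_def)
    also have "\<dots> = (\<Sum>g\<in>F. complex_of_real ((cmod (c g))\<^sup>2))"
      by (rule sum.cong[OF refl]) (subst complex_norm_square, simp add: mult.commute)
    also have "\<dots> = complex_of_real S" by (simp add: S_def)
    finally have "S = cmod (cinner y w)" using S0 by simp
    also have "\<dots> \<le> norm y * norm w" by (rule cauchy_schwarz_cinner)
    finally have Sle: "S \<le> norm y * norm w" .
    have wle: "(norm w)\<^sup>2 \<le> B * S" unfolding w_def S_def by (rule up[OF F])
    have "S\<^sup>2 \<le> (norm y * norm w)\<^sup>2" using Sle S0 by (intro power_mono) auto
    also have "\<dots> = (norm y)\<^sup>2 * (norm w)\<^sup>2" by (simp add: power_mult_distrib)
    also have "\<dots> \<le> (norm y)\<^sup>2 * (B * S)" by (intro mult_left_mono wle) simp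
    finally have "S * S \<le> S * (B * (norm y)\<^sup>2)" by (simp add: power2_eq_square algebra_simps)
    then have "S \<le> B * (norm y)\<^sup>2"
    proof (cases "S = 0")
      case True then show ?thesis using B by simp
    next
      case False
      then have "S > 0" using S0 by simp
      then show ?thesis using \<open>S * S \<le> S * (B * (norm y)\<^sup>2)\<close> by (simp add: mult_le_cancel_left_pos)
    qed
    then show ?thesis by (simp add: S_def)
  qed
  have "analysis_op G \<pi> \<eta> y \<in> l2 G \<and> (l2_norm G (analysis_op G \<pi> \<eta> y))\<^sup>2 \<le> B * (norm y)\<^sup>2"
  proof (rule l2_memI_bound)
    show "analysis_op G \<pi> \<eta> y g = 0" if "g \<notin> carrier G" for g using that by (simp add: analysis_op_def)
    show "(\<Sum>g\<in>F. (cmod (analysis_op G \<pi> \<eta> y g))\<^sup>2) \<le> B * (norm y)\<^sup>2"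
      if F: "finite F" "F \<subseteq> carrier G" for F
    proof -
      have "(\<Sum>g\<in>F. (cmod (analysis_op G \<pi> \<eta> y g))\<^sup>2) = (\<Sum>g\<in>F. (cmod (c g))\<^sup>2)"
        by (rule sum.cong) (use F in \<open>auto simp: analysis_op_def c_def\<close>)
      then show ?thesis using fb[OF F] by simp
    qed
  qed
  then show ?thesis by blast
qed

lemma synth_summable:
  assumes riesz: "riesz_vector G \<pi> \<eta>" and c: "c \<in> l2 G"
  shows "(\<lambda>k. c k *\<^sub>C \<pi> k \<eta>) summable_on carrier G"
proof -
  obtain A B where A: "0 < A" and B: "0 < B" and AB: "\<forall>(c :: 'g \<Rightarrow> complex) F. finite F \<and> F \<subseteq> carrier G \<longrightarrow>
        A * (\<Sum>g\<in>F. (cmod (c g))\<^sup>2) \<le> (norm (\<Sum>g\<in>F. c g *\<^sub>C \<pi> g \<eta>))\<^sup>2 \<and>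
        (norm (\<Sum>g\<in>F. c g *\<^sub>C \<pi> g \<eta>))\<^sup>2 \<le> B * (\<Sum>g\<in>F. (cmod (c g))\<^sup>2)"
    using riesz unfolding riesz_vector_def by blast
  have lo: "\<And>c F. finite F \<Longrightarrow> F \<subseteq> carrier G \<Longrightarrow>
        A * (\<Sum>g\<in>F. (cmod (c g))\<^sup>2) \<le> (norm (\<Sum>g\<in>F. c g *\<^sub>C \<pi> g \<eta>))\<^sup>2"
    using AB by blast
  have up: "\<And>c F. finite F \<Longrightarrow> F \<subseteq> carrier G \<Longrightarrow>
        (norm (\<Sum>g\<in>F. c g *\<^sub>C \<pi> g \<eta>))\<^sup>2 \<le> B * (\<Sum>g\<in>F. (cmod (c g))\<^sup>2)"
    using AB by blast
  show ?thesis
    by (rule summable_on_bessel_bound[where w = "\<lambda>k. (cmod (c k))\<^sup>2" and B = B])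
       (use l2_summable[OF c] B up in auto)
qed

lemma synth_lower:
  assumes riesz: "riesz_vector G \<pi> \<eta>" and c: "c \<in> l2 G"
  shows "\<exists>A>0. A * (l2_norm G c)\<^sup>2 \<le> (norm (\<Sum>\<^sub>\<infinity>k\<in>carrier G. c k *\<^sub>C \<pi> k \<eta>))\<^sup>2"
proof -
  obtain A B where A: "0 < A" and B: "0 < B" and AB: "\<forall>(c :: 'g \<Rightarrow> complex) F. finite F \<and> F \<subseteq> carrier G \<longrightarrow>
        A * (\<Sum>g\<in>F. (cmod (c g))\<^sup>2) \<le> (norm (\<Sum>g\<in>F. c g *\<^sub>C \<pi> g \<eta>))\<^sup>2 \<and>
        (norm (\<Sum>g\<in>F. c g *\<^sub>C \<pi> g \<eta>))\<^sup>2 \<le> B * (\<Sum>g\<in>F. (cmod (c g))\<^sup>2)"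
    using riesz unfolding riesz_vector_def by blast
  have lo: "\<And>c F. finite F \<Longrightarrow> F \<subseteq> carrier G \<Longrightarrow>
        A * (\<Sum>g\<in>F. (cmod (c g))\<^sup>2) \<le> (norm (\<Sum>g\<in>F. c g *\<^sub>C \<pi> g \<eta>))\<^sup>2"
    using AB by blast
  have up: "\<And>c F. finite F \<Longrightarrow> F \<subseteq> carrier G \<Longrightarrow>
        (norm (\<Sum>g\<in>F. c g *\<^sub>C \<pi> g \<eta>))\<^sup>2 \<le> B * (\<Sum>g\<in>F. (cmod (c g))\<^sup>2)"
    using AB by blast
  define x where "x = (\<Sum>\<^sub>\<infinity>k\<in>carrier G. c k *\<^sub>C \<pi> k \<eta>)"
  have "((\<lambda>k. c k *\<^sub>C \<pi> k \<eta>) has_sum x) (carrier G)"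
    unfolding x_def by (rule has_sum_infsum[OF synth_summable[OF riesz c]])
  then have t1: "((\<lambda>F. (norm (\<Sum>k\<in>F. c k *\<^sub>C \<pi> k \<eta>))\<^sup>2) \<longlongrightarrow> (norm x)\<^sup>2) (finite_subsets_at_top (carrier G))"
    unfolding has_sum_def by (intro tendsto_intros)
  have "((\<lambda>k. (cmod (c k))\<^sup>2) has_sum (l2_norm G c)\<^sup>2) (carrier G)"
    using has_sum_infsum[OF l2_summable[OF c]] by (simp add: l2_norm_sq[OF c])
  then have t2: "((\<lambda>F. A * (\<Sum>k\<in>F. (cmod (c k))\<^sup>2)) \<longlongrightarrow> A * (l2_norm G c)\<^sup>2) (finite_subsets_at_top (carrier G))"
    unfolding has_sum_def by (intro tendsto_intros)
  have "A * (l2_norm G c)\<^sup>2 \<le> (norm x)\<^sup>2"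
    by (rule tendsto_le[OF _ t1 t2]) (auto intro!: eventually_finite_subsets_at_top_weakI lo)
  then show ?thesis using A unfolding x_def by blast
qed

lemma pi_eta_nonzero:
  assumes riesz: "riesz_vector G \<pi> \<eta>" and g: "g \<in> carrier G"
  shows "\<pi> g \<eta> \<noteq> 0"
proof
  assume z: "\<pi> g \<eta> = 0"
  obtain A B where A: "0 < A" and B: "0 < B" and AB: "\<forall>(c :: 'g \<Rightarrow> complex) F. finite F \<and> F \<subseteq> carrier G \<longrightarrow>
        A * (\<Sum>g\<in>F. (cmod (c g))\<^sup>2) \<le> (norm (\<Sum>g\<in>F. c g *\<^sub>C \<pi> g \<eta>))\<^sup>2 \<and>
        (norm (\<Sum>g\<in>F. c g *\<^sub>C \<pi> g \<eta>))\<^sup>2 \<le> B * (\<Sum>g\<in>F. (cmod (c g))\<^sup>2)"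
    using riesz unfolding riesz_vector_def by blast
  have lo: "\<And>c F. finite F \<Longrightarrow> F \<subseteq> carrier G \<Longrightarrow>
        A * (\<Sum>g\<in>F. (cmod (c g))\<^sup>2) \<le> (norm (\<Sum>g\<in>F. c g *\<^sub>C \<pi> g \<eta>))\<^sup>2"
    using AB by blast
  have up: "\<And>c F. finite F \<Longrightarrow> F \<subseteq> carrier G \<Longrightarrow>
        (norm (\<Sum>g\<in>F. c g *\<^sub>C \<pi> g \<eta>))\<^sup>2 \<le> B * (\<Sum>g\<in>F. (cmod (c g))\<^sup>2)"
    using AB by blast
  have "A * (\<Sum>h\<in>{g}. (cmod ((\<lambda>_. 1::complex) h))\<^sup>2) \<le> (norm (\<Sum>h\<in>{g}. (\<lambda>_. 1::complex) h *\<^sub>C \<pi> h \<eta>))\<^sup>2"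
    by (rule lo) (use g in auto)
  then show False using A z by simp
qed

lemma mu_one:
  assumes riesz: "riesz_vector G \<pi> \<eta>" and g: "g \<in> carrier G"
  shows "\<mu> g \<one>\<^bsub>G\<^esub> = \<mu> \<one>\<^bsub>G\<^esub> \<one>\<^bsub>G\<^esub>"
proof -
  have one: "\<one>\<^bsub>G\<^esub> \<in> carrier G" by simp
  have p1: "\<pi> \<one>\<^bsub>G\<^esub> v = \<mu> \<one>\<^bsub>G\<^esub> \<one>\<^bsub>G\<^esub> *\<^sub>C v" for v
  proof -
    have "\<pi> \<one>\<^bsub>G\<^esub> (\<pi> \<one>\<^bsub>G\<^esub> v) = \<mu> \<one>\<^bsub>G\<^esub> \<one>\<^bsub>G\<^esub> *\<^sub>C \<pi> \<one>\<^bsub>G\<^esub> v"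
      using cocy[OF one one] by simp
    also have "\<dots> = \<pi> \<one>\<^bsub>G\<^esub> (\<mu> \<one>\<^bsub>G\<^esub> \<one>\<^bsub>G\<^esub> *\<^sub>C v)"
      by (simp add: cunitary_scaleC unit)
    finally show ?thesis by (rule cunitary_inj[OF unit[OF one]])
  qed
  have "\<mu> g \<one>\<^bsub>G\<^esub> *\<^sub>C \<pi> g \<eta> = \<pi> g (\<pi> \<one>\<^bsub>G\<^esub> \<eta>)"
    using cocy[OF g one] g by simp
  also have "\<dots> = \<mu> \<one>\<^bsub>G\<^esub> \<one>\<^bsub>G\<^esub> *\<^sub>C \<pi> g \<eta>"
    by (simp add: p1 cunitary_scaleC unit g)
  finally have "(\<mu> g \<one>\<^bsub>G\<^esub> - \<mu> \<one>\<^bsub>G\<^esub> \<one>\<^bsub>G\<^esub>) *\<^sub>C \<pi> g \<eta> = 0"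
    by (simp add: scaleC_diff_left)
  then show ?thesis using pi_eta_nonzero[OF riesz g] by (simp add: scaleC_eq_0_iff)
qed

lemma synth_inner:
  assumes riesz: "riesz_vector G \<pi> \<eta>" and p: "p \<in> l2 G" and g: "g \<in> carrier G"
  shows "cinner y (\<pi> g (\<Sum>\<^sub>\<infinity>k\<in>carrier G. p k *\<^sub>C \<pi> k \<eta>)) =
         l2_inner G (analysis_op G \<pi> \<eta> y) (Bop g p)"
proof -
  define f where "f = (\<lambda>k. p k *\<^sub>C \<pi> k \<eta>)"
  have fs: "f summable_on carrier G" unfolding f_def by (rule synth_summable[OF riesz p])
  have bl: "bounded_linear (\<pi> g)" by (rule cunitary_bounded_linear[OF unit[OF g]])
  have pgx: "\<pi> g (infsum f (carrier G)) = infsum (\<lambda>k. \<pi> g (f k)) (carrier G)"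
    by (rule infsum_bounded_linear_simple[OF bl fs, symmetric])
  have sm1: "(\<lambda>k. \<pi> g (f k)) summable_on carrier G" by (rule summable_on_bounded_linear[OF bl fs])
  have c1: "cinner (\<pi> g (infsum f (carrier G))) y = infsum (\<lambda>k. cinner (\<pi> g (f k)) y) (carrier G)"
    unfolding pgx by (rule infsum_bounded_linear_simple[OF bounded_linear_cinner_left sm1, symmetric])
  have trm: "cinner (\<pi> g (f k)) y = (p k * \<mu> g k) * cinner (\<pi> (g \<otimes>\<^bsub>G\<^esub> k) \<eta>) y"
    if k: "k \<in> carrier G" for k
    by (simp add: f_def cunitary_scaleC unit g cocy[OF g k] scaleC_scaleC cinner_scaleC_left)
  have "cinner y (\<pi> g (infsum f (carrier G))) = cnj (cinner (\<pi> g (infsum f (carrier G))) y)"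
    by (rule cinner_commute)
  also have "\<dots> = cnj (infsum (\<lambda>k. (p k * \<mu> g k) * cinner (\<pi> (g \<otimes>\<^bsub>G\<^esub> k) \<eta>) y) (carrier G))"
    unfolding c1 by (simp add: trm cong: infsum_cong)
  also have "\<dots> = infsum (\<lambda>k. cnj ((p k * \<mu> g k) * cinner (\<pi> (g \<otimes>\<^bsub>G\<^esub> k) \<eta>) y)) (carrier G)"
    by (rule infsum_cnj[symmetric])
  also have "\<dots> = infsum (\<lambda>k. analysis_op G \<pi> \<eta> y (g \<otimes>\<^bsub>G\<^esub> k) * cnj (Bop g p (g \<otimes>\<^bsub>G\<^esub> k))) (carrier G)"
  proof (rule infsum_cong)
    fix k assume k: "k \<in> carrier G"
    have "cnj (cinner (\<pi> (g \<otimes>\<^bsub>G\<^esub> k) \<eta>) y) = cinner y (\<pi> (g \<otimes>\<^bsub>G\<^esub> k) \<eta>)"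
      by (subst cinner_commute[of y]) simp
    then show "cnj ((p k * \<mu> g k) * cinner (\<pi> (g \<otimes>\<^bsub>G\<^esub> k) \<eta>) y) =
        analysis_op G \<pi> \<eta> y (g \<otimes>\<^bsub>G\<^esub> k) * cnj (Bop g p (g \<otimes>\<^bsub>G\<^esub> k))"
      using g k by (simp add: analysis_op_def Bop_def gl1 mult.commute mult.left_commute)
  qed
  also have "\<dots> = l2_inner G (analysis_op G \<pi> \<eta> y) (Bop g p)"
    unfolding l2_inner_def
    by (rule infsum_reindex_bij_betw[OF bij_left[OF g], where f = "\<lambda>m. analysis_op G \<pi> \<eta> y m * cnj (Bop g p m)"])
  finally show ?thesis by (simp add: f_def)
qed

theorem main:
  assumes riesz: "riesz_vector G \<pi> \<eta>" and nd: "\<not> l2_dense G (analysis_range G \<pi> \<xi>)"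
  shows "\<exists>x. x \<noteq> 0 \<and> (\<forall>a\<in>analysis_range G \<pi> x. \<forall>b\<in>analysis_range G \<pi> \<xi>. l2_inner G a b = 0)"
proof -
  define M where "M = analysis_range G \<pi> \<xi>"
  define N where "N = Nsp \<xi>"
  have Ml2: "M \<subseteq> l2 G" unfolding M_def by (rule range_sub)
  obtain f0 \<epsilon> where f0: "f0 \<in> l2 G" and eps: "\<epsilon> > 0"
    and far: "\<And>s. s \<in> M \<Longrightarrow> \<not> l2_norm G (\<lambda>g. f0 g - s g) < \<epsilon>"
    using nd unfolding l2_dense_def M_def by blast
  define S where "S = {u \<in> l2 G. \<forall>e>0. \<exists>s\<in>M. l2_norm G (\<lambda>g. u g - s g) < e}"
  have S_sub: "S \<subseteq> l2 G" by (auto simp: S_def)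
  have Sapprox: "\<exists>s\<in>M. l2_norm G (\<lambda>g. u g - s g) < e" if "u \<in> S" "e > 0" for u e
    using that by (simp add: S_def)
  have MS: "M \<subseteq> S"
  proof
    fix b assume b: "b \<in> M"
    have "l2_norm G (\<lambda>g. b g - b g) = 0" by (simp add: l2_norm_def)
    then show "b \<in> S" using b Ml2 by (force simp: S_def)
  qed
  have S0: "(\<lambda>g. 0) \<in> S" using MS range_zero by (auto simp: M_def)
  have S_add: "(\<lambda>g. u1 g + u2 g) \<in> S" if u: "u1 \<in> S" "u2 \<in> S" for u1 u2
  proof -
    have ul: "u1 \<in> l2 G" "u2 \<in> l2 G" using u by (auto simp: S_def)
    have "\<exists>s\<in>M. l2_norm G (\<lambda>g. (u1 g + u2 g) - s g) < e" if e: "e > 0" for e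
    proof -
      obtain s1 where s1: "s1 \<in> M" "l2_norm G (\<lambda>g. u1 g - s1 g) < e / 2"
        using Sapprox[OF u(1), of "e/2"] e by auto
      obtain s2 where s2: "s2 \<in> M" "l2_norm G (\<lambda>g. u2 g - s2 g) < e / 2"
        using Sapprox[OF u(2), of "e/2"] e by auto
      have sl: "s1 \<in> l2 G" "s2 \<in> l2 G" using s1 s2 Ml2 by auto
      have "(\<lambda>g. (u1 g + u2 g) - (s1 g + s2 g)) = (\<lambda>g. (u1 g - s1 g) + (u2 g - s2 g))"
        by (simp add: algebra_simps)
      moreover have "l2_norm G (\<lambda>g. (u1 g - s1 g) + (u2 g - s2 g)) \<le>
          l2_norm G (\<lambda>g. u1 g - s1 g) + l2_norm G (\<lambda>g. u2 g - s2 g)"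
        by (rule l2_triangle[OF l2_diff[OF ul(1) sl(1)] l2_diff[OF ul(2) sl(2)]])
      ultimately have "l2_norm G (\<lambda>g. (u1 g + u2 g) - (s1 g + s2 g)) < e" using s1 s2 by simp
      moreover have "(\<lambda>g. s1 g + s2 g) \<in> M" using s1 s2 range_add by (simp add: M_def)
      ultimately show ?thesis by (intro bexI[where x = "\<lambda>g. s1 g + s2 g"]) auto
    qed
    then show ?thesis using l2_add[OF ul] by (simp add: S_def)
  qed
  have S_scale: "(\<lambda>g. c * u g) \<in> S" if u: "u \<in> S" for c u
  proof -
    have ul: "u \<in> l2 G" using u by (auto simp: S_def)
    have "\<exists>s\<in>M. l2_norm G (\<lambda>g. c * u g - s g) < e" if e: "e > 0" for e
    proof -
      have c1: "cmod c + 1 > 0" using norm_ge_zero[of c] by linarith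
      have e': "e / (cmod c + 1) > 0" using e c1 by (rule divide_pos_pos)
      obtain s where s: "s \<in> M" "l2_norm G (\<lambda>g. u g - s g) < e / (cmod c + 1)"
        using Sapprox[OF u e'] by auto
      have sl: "s \<in> l2 G" using s Ml2 by auto
      have "(\<lambda>g. c * u g - c * s g) = (\<lambda>g. c * (u g - s g))" by (simp add: algebra_simps)
      then have "l2_norm G (\<lambda>g. c * u g - c * s g) = cmod c * l2_norm G (\<lambda>g. u g - s g)"
        using l2_norm_scale[OF l2_diff[OF ul sl]] by simp
      also have "\<dots> \<le> (cmod c + 1) * l2_norm G (\<lambda>g. u g - s g)"
        by (intro mult_right_mono) (auto simp: l2_norm_nonneg)
      also have "\<dots> < (cmod c + 1) * (e / (cmod c + 1))"
        using s(2) c1 by (intro mult_strict_left_mono) auto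
      also have "\<dots> = e" using c1 by simp
      finally have "l2_norm G (\<lambda>g. c * u g - c * s g) < e" .
      moreover have "(\<lambda>g. c * s g) \<in> M" using s range_scale by (simp add: M_def)
      ultimately show ?thesis by (intro bexI[where x = "\<lambda>g. c * s g"]) auto
    qed
    then show ?thesis using l2_scale[OF ul] by (simp add: S_def)
  qed
  have S_closed: "f \<in> S" if s: "\<And>j. s j \<in> S" and f: "f \<in> l2 G"
      and lim: "(\<lambda>j. l2_norm G (\<lambda>g. s j g - f g)) \<longlonglongrightarrow> 0" for s f
  proof -
    have "\<exists>t\<in>M. l2_norm G (\<lambda>g. f g - t g) < e" if e: "e > 0" for e
    proof -
      have "\<exists>N. \<forall>n\<ge>N. norm (l2_norm G (\<lambda>g. s n g - f g) - 0) < e / 2"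
        using LIMSEQ_iff[THEN iffD1, OF lim, rule_format, of "e/2"] e by simp
      then obtain j where "norm (l2_norm G (\<lambda>g. s j g - f g) - 0) < e / 2" by blast
      then have j: "l2_norm G (\<lambda>g. s j g - f g) < e / 2" by (simp add: l2_norm_nonneg)
      have sl: "s j \<in> l2 G" using s S_sub by blast
      obtain t where t: "t \<in> M" "l2_norm G (\<lambda>g. s j g - t g) < e / 2"
        using Sapprox[OF s[of j], of "e/2"] e by auto
      have tl: "t \<in> l2 G" using t Ml2 by auto
      have "l2_norm G (\<lambda>g. f g - t g) \<le> l2_norm G (\<lambda>g. f g - s j g) + l2_norm G (\<lambda>g. s j g - t g)"
        by (rule l2_triangle_diff[OF f sl tl])
      also have "l2_norm G (\<lambda>g. f g - s j g) = l2_norm G (\<lambda>g. s j g - f g)"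
        by (rule l2_norm_minus_commute[OF f sl])
      finally have "l2_norm G (\<lambda>g. f g - t g) < e" using j t by simp
      then show ?thesis using t by blast
    qed
    then show ?thesis using f by (simp add: S_def)
  qed
  have "\<exists>q\<in>S. \<forall>s\<in>S. l2_inner G (\<lambda>g. f0 g - q g) s = 0"
    by (rule l2_projection[OF S_sub S0 S_add S_scale S_closed f0])
  then obtain q where qS: "q \<in> S" and qorth: "\<forall>s\<in>S. l2_inner G (\<lambda>g. f0 g - q g) s = 0" ..
  define n0 where "n0 = (\<lambda>g. f0 g - q g)"
  have ql: "q \<in> l2 G" using qS S_sub by blast
  have n0l: "n0 \<in> l2 G" unfolding n0_def by (rule l2_diff[OF f0 ql])
  have n0N: "n0 \<in> N" using qorth MS n0l by (auto simp: N_def Nsp_def n0_def M_def)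
  have n0nz: "n0 \<noteq> (\<lambda>g. 0)"
  proof
    assume "n0 = (\<lambda>g. 0)"
    then have "f0 = q" by (auto simp: n0_def fun_eq_iff)
    then have "f0 \<in> S" using qS by simp
    then obtain s where "s \<in> M" "l2_norm G (\<lambda>g. f0 g - s g) < \<epsilon>" using eps by (auto simp: S_def)
    then show False using far by blast
  qed
  define \<delta> :: "'g \<Rightarrow> 'g \<Rightarrow> complex" where "\<delta> g0 = (\<lambda>g. if g = g0 then 1 else 0)" for g0
  have \<delta>l: "\<delta> g0 \<in> l2 G" if "g0 \<in> carrier G" for g0 unfolding \<delta>_def by (rule l2_delta[OF that])
  have one: "\<one>\<^bsub>G\<^esub> \<in> carrier G" by simp
  have \<delta>B: "\<delta> h = (\<lambda>m. cnj (\<mu> h \<one>\<^bsub>G\<^esub>) * Bop h (\<delta> \<one>\<^bsub>G\<^esub>) m)" if h: "h \<in> carrier G" for h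
  proof
    fix m
    show "\<delta> h m = cnj (\<mu> h \<one>\<^bsub>G\<^esub>) * Bop h (\<delta> \<one>\<^bsub>G\<^esub>) m"
    proof (cases "m \<in> carrier G")
      case False
      then have "m \<noteq> h" using h by auto
      then show ?thesis using False by (simp add: \<delta>_def Bop_def)
    next
      case m: True
      have "inv\<^bsub>G\<^esub> h \<otimes>\<^bsub>G\<^esub> m = \<one>\<^bsub>G\<^esub> \<longleftrightarrow> m = h"
      proof
        assume "inv\<^bsub>G\<^esub> h \<otimes>\<^bsub>G\<^esub> m = \<one>\<^bsub>G\<^esub>"
        then have "h \<otimes>\<^bsub>G\<^esub> (inv\<^bsub>G\<^esub> h \<otimes>\<^bsub>G\<^esub> m) = h" using h by simp
        then show "m = h" using gl2[OF h m] by simp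
      qed (use h in simp)
      then show ?thesis using m h mu_cnj[OF h one]
        by (auto simp: \<delta>_def Bop_def mult.assoc[symmetric])
    qed
  qed
  define P where "P = Pr \<xi>"
  define p where "p = P (\<delta> \<one>\<^bsub>G\<^esub>)"
  have pN: "p \<in> N" unfolding p_def P_def N_def by (rule Pr(1)[OF \<delta>l[OF one]])
  have pl: "p \<in> l2 G" using pN N_sub by (auto simp: N_def)
  have P\<delta>: "P (\<delta> h) = (\<lambda>m. cnj (\<mu> h \<one>\<^bsub>G\<^esub>) * Bop h p m)" if h: "h \<in> carrier G" for h
  proof -
    have "P (\<delta> h) = P (\<lambda>m. cnj (\<mu> h \<one>\<^bsub>G\<^esub>) * Bop h (\<delta> \<one>\<^bsub>G\<^esub>) m)" using \<delta>B[OF h] by simp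
    also have "\<dots> = (\<lambda>m. cnj (\<mu> h \<one>\<^bsub>G\<^esub>) * P (Bop h (\<delta> \<one>\<^bsub>G\<^esub>)) m)"
      unfolding P_def by (rule Pr_scale[OF Bop_l2[OF h \<delta>l[OF one]]])
    also have "P (Bop h (\<delta> \<one>\<^bsub>G\<^esub>)) = Bop h p"
      unfolding P_def p_def by (rule Pr_B[OF h \<delta>l[OF one]])
    finally show ?thesis .
  qed
  have Ppoint: "P a g = \<mu> g \<one>\<^bsub>G\<^esub> * l2_inner G a (Bop g p)" if a: "a \<in> l2 G" and g: "g \<in> carrier G" for a g
  proof -
    have "P a g = l2_inner G (P a) (\<delta> g)" unfolding \<delta>_def by (rule l2_inner_delta[OF g, symmetric])
    also have "\<dots> = l2_inner G a (P (\<delta> g))" unfolding P_def by (rule Pr_sym[OF a \<delta>l[OF g]])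
    also have "\<dots> = \<mu> g \<one>\<^bsub>G\<^esub> * l2_inner G a (Bop g p)"
      unfolding P\<delta>[OF g] by (simp add: l2_inner_scale_right)
    finally show ?thesis .
  qed
  have pnz: "p \<noteq> (\<lambda>g. 0)"
  proof
    assume p0: "p = (\<lambda>g. 0)"
    have "n0 g = 0" for g
    proof (cases "g \<in> carrier G")
      case False then show ?thesis using n0l by (simp add: l2_zero_out)
    next
      case True
      have "n0 g = P n0 g" unfolding P_def using Pr_fix[of n0 \<xi>] n0N by (simp add: N_def)
      also have "\<dots> = 0" using Ppoint[OF n0l True] p0 by (simp add: Bop_zero l2_inner_def)
      finally show ?thesis .
    qed
    then show False using n0nz by auto
  qed
  have pnorm: "l2_norm G p > 0"
  proof -
    have "l2_norm G p \<noteq> 0" using l2_norm_eq_0[OF pl] pnz by blast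
    then show ?thesis using l2_norm_nonneg[of G p] by linarith
  qed
  define x where "x = (\<Sum>\<^sub>\<infinity>k\<in>carrier G. p k *\<^sub>C \<pi> k \<eta>)"
  have xnz: "x \<noteq> 0"
  proof
    assume x0: "x = 0"
    obtain A where A: "A > 0" "A * (l2_norm G p)\<^sup>2 \<le> (norm x)\<^sup>2"
      using synth_lower[OF riesz pl] unfolding x_def by blast
    have "A * (l2_norm G p)\<^sup>2 > 0" using A pnorm by simp
    then show False using A x0 by simp
  qed
  define \<kappa> where "\<kappa> = \<mu> \<one>\<^bsub>G\<^esub> \<one>\<^bsub>G\<^esub>"
  have \<kappa>: "cnj \<kappa> * \<kappa> = 1" unfolding \<kappa>_def by (rule mu_cnj[OF one one])
  have Theta_x: "analysis_op G \<pi> x y = (\<lambda>g. cnj \<kappa> * P (analysis_op G \<pi> \<eta> y) g)" for y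
  proof
    fix g
    define a where "a = analysis_op G \<pi> \<eta> y"
    have al: "a \<in> l2 G" unfolding a_def by (rule bessel_of_riesz[OF riesz])
    have Pal: "P a \<in> l2 G" unfolding P_def by (rule Pr_l2[OF al])
    show "analysis_op G \<pi> x y g = cnj \<kappa> * P (analysis_op G \<pi> \<eta> y) g"
    proof (cases "g \<in> carrier G")
      case False then show ?thesis using Pal by (simp add: analysis_op_def a_def l2_zero_out)
    next
      case g: True
      have "analysis_op G \<pi> x y g = l2_inner G a (Bop g p)"
        using synth_inner[OF riesz pl g, of y] g by (simp add: analysis_op_def x_def a_def)
      also have "\<dots> = cnj \<kappa> * P a g"
        using Ppoint[OF al g] mu_one[OF riesz g] \<kappa> by (simp add: \<kappa>_def mult.assoc[symmetric])
      finally show ?thesis by (simp add: a_def)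
    qed
  qed
  have "\<forall>a\<in>analysis_range G \<pi> x. \<forall>b\<in>analysis_range G \<pi> \<xi>. l2_inner G a b = 0"
  proof (intro ballI)
    fix a b assume a: "a \<in> analysis_range G \<pi> x" and b: "b \<in> analysis_range G \<pi> \<xi>"
    obtain y where ay: "a = analysis_op G \<pi> x y" using a by (auto simp: analysis_range_def)
    have "P (analysis_op G \<pi> \<eta> y) \<in> Nsp \<xi>"
      unfolding P_def by (rule Pr(1)[OF bessel_of_riesz[OF riesz]])
    then have "a \<in> Nsp \<xi>" unfolding ay Theta_x by (rule N_scale)
    then show "l2_inner G a b = 0" using b by (simp add: Nsp_def)
  qed
  then show ?thesis using xnz by blast
qed

end

theorem lemma3p9:
  fixes G :: "('g, 'b) monoid_scheme"
    and \<pi> :: "'g \<Rightarrow> 'h::{complex_inner, complete_space} \<Rightarrow> 'h"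
    and \<xi> :: 'h
  assumes "group G"
    and "countable (carrier G)"
    and "proj_unitary_rep G \<pi>"
    and "closure {v. bessel_vector G \<pi> v} = UNIV"
    and "\<exists>\<eta>. riesz_vector G \<pi> \<eta>"
    and "\<not> l2_dense G (analysis_range G \<pi> \<xi>)"
  shows "\<exists>x. x \<noteq> 0 \<and>
    (\<forall>a\<in>analysis_range G \<pi> x. \<forall>b\<in>analysis_range G \<pi> \<xi>. l2_inner G a b = 0)"
proof -
  obtain \<mu> :: "'g \<Rightarrow> 'g \<Rightarrow> complex" where
    mu: "\<forall>g\<in>carrier G. \<forall>h\<in>carrier G. cmod (\<mu> g h) = 1 \<and>
          (\<forall>x. \<pi> g (\<pi> h x) = \<mu> g h *\<^sub>C \<pi> (g \<otimes>\<^bsub>G\<^esub> h) x)"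
    using assms(3) unfolding proj_unitary_rep_def by blast
  have unit: "\<forall>g\<in>carrier G. cunitary (\<pi> g)" using assms(3) unfolding proj_unitary_rep_def by blast
  interpret ps: proj_setting G \<pi> \<mu>
    by (rule proj_setting.intro[OF assms(1)], unfold_locales) (use mu unit in auto)
  obtain \<eta> where "riesz_vector G \<pi> \<eta>" using assms(5) by blast
  then show ?thesis by (rule ps.main[OF _ assms(6)])
qed

end
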